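(* Let $\boldsymbol\nu=\{\nu_t\}_{t>0}$ be a measurable factorizing family over $[0,1]\times\{\ast\}$. Fix $s,t>0$, put $u=\lambda(s+t)$, $u_1=\lambda s$, $u_2=\lambda t$, $\sigma:=(\nu_{u_1}\otimes\nu_{u_2})\circ\oplus_{u_1,u_2}^{-1}$, and let $E_{10}=\{Z\cap[0,u_1]\neq\varnothing,Z\cap[u_1,u]=\varnothing\}$, $E_{01}=\{Z\cap[0,u_1]=\varnothing,Z\cap[u_1,u]\neq\varnothing\}$, $E_{11}=\{Z\cap[0,u_1]\neq\varnothing,Z\cap[u_1,u]\neq\varnothing\}$. Assume that as $\lambda\downarrow0$: (i) $\nu_u(Z\neq\varnothing)=O(u)$ and $\nu_{u_i}(Z\neq\varnothing)=O(u_i)$; (ii) $\nu_u(E_{11})=O(u^2)$; (iii) $|\nu_u(\{\varnothing\})-\nu_{u_1}(\{\varnothing\})\nu_{u_2}(\{\varnothing\})|=O(u^2)$; (iv a) $|\nu_u(E_{10})-\sigma(E_{10})|=O(u^2)$ and $|\nu_u(E_{01})-\sigma(E_{01})|=O(u^2)$; (iv b) $1-H(\widehat\nu_u^{10},\nu_{u_1}(\cdot\mid Z\neq\varnothing))=O(u)$ and $1-H(\widehat\nu_u^{01},\nu_{u_2}(\cdot\mid Z\neq\varnothing))=O(u)$, where $\widehat\nu_u^{10}$ is the law of $Z\cap[0,u_1]$ under $\nu_u(\cdot\mid E_{10})$ and $\widehat\nu_u^{01}$ is the law of $(Z\cap[u_1,u])-u_1$ under $\nu_u(\cdot\mid E_{01})$.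 Then $1-H(\nu_u,\sigma)=O(u^2)$.
   Context: $\mathscr C_t^{\{\ast\}}$ is the space of closed subsets of $[0,t]$ with Borel $\sigma$-field $\Sigma_t$ of the Fell topology; $\oplus_{s,t}(Z_1,Z_2)=Z_1\cup(s+Z_2)$; $\sigma_t(Z)=\{r/t:r\in Z\}$. A measurable factorizing family over $[0,1]\times\{\ast\}$ is a family of probability measures $\nu_t$ on $\mathscr C_t^{\{\ast\}}$ with: (i) $\nu_{s+t}$ and $(\nu_s\otimes\nu_t)\circ\oplus_{s,t}^{-1}$ mutually absolutely continuous; (ii) $\nu_t(\{Z:r\in Z\})=0$ for all $r\in[0,t]$; (iii) no $\nu_t$ supported on finitely many atoms; (iv a) a countable ring $\mathcal R\subset\Sigma_1$ generating $\Sigma_1$ with $t\mapsto(\sigma_t)_*\nu_t(A)$ Borel for $A\in\mathcal R$; (iv b) a Borel $\Delta$ on $(0,\infty)^2\times\mathscr C_1^{\{\ast\}}$ with $\Delta(s,t,\sigma_{s+t}(Z))=d((\nu_s\otimes\nu_t)\circ\oplus_{s,t}^{-1})/d\nu_{s+t}(Z)$ a.e. For probability measures $\rho,\eta$ dominated by $m$, $H(\rho,\eta)=\int\sqrt{(d\rho/dm)(d\eta/dm)}\,dm$. *)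

theory Defs
  imports "HOL-Probability.Probability" "HOL-Library.Landau_Symbols"
begin

definition closed_sets_on :: "real \<Rightarrow> real set set" where
  "closed_sets_on t = {Z. Z \<subseteq> {0..t} \<and> closed Z}"

definition fell_topology :: "real \<Rightarrow> real set topology" where
  "fell_topology t = topology_generated_by
     ({{Z \<in> closed_sets_on t. Z \<inter> K = {}} | K. K \<subseteq> {0..t} \<and> compact K}
      \<union> {{Z \<in> closed_sets_on t. Z \<inter> G \<noteq> {}} | G. openin (top_of_set {0..t}) G})"

definition Cmeas :: "real \<Rightarrow> real set measure" where
  "Cmeas t = sigma (closed_sets_on t) {U. openin (fell_topology t) U}"

definition oplus :: "real \<Rightarrow> real set \<times> real set \<Rightarrow> real set" where
  "oplus s ZZ = fst ZZ \<union> (\<lambda>r. s + r) ` snd ZZ"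

definition rescale :: "real \<Rightarrow> real set \<Rightarrow> real set" where
  "rescale t Z = (\<lambda>r. r / t) ` Z"

definition hell_dom :: "'a measure \<Rightarrow> 'a measure \<Rightarrow> 'a measure" where
  "hell_dom \<rho> \<eta> = measure_of (space \<rho>) (sets \<rho>) (\<lambda>A. emeasure \<rho> A + emeasure \<eta> A)"

definition hellinger :: "'a measure \<Rightarrow> 'a measure \<Rightarrow> real" where
  "hellinger \<rho> \<eta> = (let m = hell_dom \<rho> \<eta> in
     \<integral>x. sqrt (enn2real (RN_deriv m \<rho> x) * enn2real (RN_deriv m \<eta> x)) \<partial>m)"

definition cond_measure :: "'a measure \<Rightarrow> 'a set \<Rightarrow> 'a measure" where
  "cond_measure M A = density M (\<lambda>x. indicator A x / emeasure M A)"

definition pos_reals :: "real measure" where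
  "pos_reals = restrict_space borel {0<..}"

definition meas_fact_family :: "(real \<Rightarrow> real set measure) \<Rightarrow> bool" where
  "meas_fact_family \<nu> \<longleftrightarrow>
     (\<forall>t>0. prob_space (\<nu> t) \<and> sets (\<nu> t) = sets (Cmeas t) \<and> space (\<nu> t) = space (Cmeas t))
   \<and> (\<forall>s>0. \<forall>t>0.
        absolutely_continuous (\<nu> (s+t)) (distr (\<nu> s \<Otimes>\<^sub>M \<nu> t) (Cmeas (s+t)) (oplus s))
      \<and> absolutely_continuous (distr (\<nu> s \<Otimes>\<^sub>M \<nu> t) (Cmeas (s+t)) (oplus s)) (\<nu> (s+t)))
   \<and> (\<forall>t>0. \<forall>r\<in>{0..t}. emeasure (\<nu> t) {Z \<in> space (\<nu> t). r \<in> Z} = 0)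
   \<and> (\<forall>t>0. \<not> (\<exists>F. finite F \<and> F \<subseteq> space (\<nu> t) \<and> emeasure (\<nu> t) (space (\<nu> t) - F) = 0))
   \<and> (\<exists>R. countable R \<and> ring_of_sets (space (Cmeas 1)) R \<and> R \<subseteq> sets (Cmeas 1)
          \<and> sigma_sets (space (Cmeas 1)) R = sets (Cmeas 1)
          \<and> (\<forall>A\<in>R. (\<lambda>t. measure (distr (\<nu> t) (Cmeas 1) (rescale t)) A) \<in> borel_measurable pos_reals))
   \<and> (\<exists>\<Delta> :: (real \<times> real) \<times> real set \<Rightarrow> real.
          \<Delta> \<in> borel_measurable (restrict_space borel ({0<..} \<times> {0<..}) \<Otimes>\<^sub>M Cmeas 1)
        \<and> (\<forall>s>0. \<forall>t>0. AE Z in \<nu> (s+t).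
              ennreal (\<Delta> ((s,t), rescale (s+t) Z))
                = RN_deriv (\<nu> (s+t)) (distr (\<nu> s \<Otimes>\<^sub>M \<nu> t) (Cmeas (s+t)) (oplus s)) Z))"

end

theory Submission
  imports Defs
begin

lemma hell_dom_density:
  fixes f g :: "'a \<Rightarrow> real"
  assumes f[measurable]: "f \<in> borel_measurable m" and g[measurable]: "g \<in> borel_measurable m"
    and f0: "\<And>x. 0 \<le> f x" and g0: "\<And>x. 0 \<le> g x"
  shows "hell_dom (density m (\<lambda>x. ennreal (f x))) (density m (\<lambda>x. ennreal (g x)))
       = density m (\<lambda>x. ennreal (f x + g x))"
proof -
  let ?r = "density m (\<lambda>x. ennreal (f x))" and ?e = "density m (\<lambda>x. ennreal (g x))"
  let ?m = "density m (\<lambda>x. ennreal (f x + g x))"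
  have "hell_dom ?r ?e = measure_of (space m) (sets m) (\<lambda>A. emeasure ?r A + emeasure ?e A)"
    unfolding hell_dom_def by simp
  also have "\<dots> = measure_of (space m) (sets m) (emeasure ?m)"
  proof (rule measure_of_eq)
    show "sets m \<subseteq> Pow (space m)" by (simp add: sets.space_closed)
    fix a assume "a \<in> sigma_sets (space m) (sets m)"
    then have a: "a \<in> sets m" by (simp add: sets.sigma_sets_eq)
    have "emeasure ?m a = (\<integral>\<^sup>+x. ennreal (f x) * indicator a x + ennreal (g x) * indicator a x \<partial>m)"
      using a f0 g0 by (simp add: emeasure_density distrib_right)
    also have "\<dots> = (\<integral>\<^sup>+x. ennreal (f x) * indicator a x \<partial>m) + (\<integral>\<^sup>+x. ennreal (g x) * indicator a x \<partial>m)"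
      using a by (intro nn_integral_add) auto
    finally show "emeasure ?r a + emeasure ?e a = emeasure ?m a"
      using a by (simp add: emeasure_density)
  qed
  also have "\<dots> = ?m" using measure_of_of_measure[of ?m] by simp
  finally show ?thesis .
qed

lemma hellinger_density:
  fixes f g :: "'a \<Rightarrow> real"
  assumes fm: "finite_measure m"
    and f[measurable]: "f \<in> borel_measurable m" and g[measurable]: "g \<in> borel_measurable m"
    and f0: "\<And>x. 0 \<le> f x" and g0: "\<And>x. 0 \<le> g x"
    and fi: "integrable m f" and gi: "integrable m g"
  shows "hellinger (density m (\<lambda>x. ennreal (f x))) (density m (\<lambda>x. ennreal (g x)))
       = (\<integral>x. sqrt (f x * g x) \<partial>m)"
proof -
  let ?r = "density m (\<lambda>x. ennreal (f x))" and ?e = "density m (\<lambda>x. ennreal (g x))"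
  let ?m = "density m (\<lambda>x. ennreal (f x + g x))"
  have hd: "hell_dom ?r ?e = ?m" by (rule hell_dom_density[OF f g f0 g0])
  have fgi: "integrable m (\<lambda>x. f x + g x)" using fi gi by simp
  have "emeasure ?m (space ?m) < \<infinity>"
    using fgi f0 g0 by (simp add: emeasure_density integrable_iff_bounded)
  then have fmm: "finite_measure ?m" by (intro finite_measureI) auto
  then interpret M: finite_measure ?m .
  define hf where "hf x = (if f x + g x = 0 then 0 else f x / (f x + g x))" for x
  define hg where "hg x = (if f x + g x = 0 then 0 else g x / (f x + g x))" for x
  have hf[measurable]: "hf \<in> borel_measurable m" unfolding hf_def by measurable
  have hg[measurable]: "hg \<in> borel_measurable m" unfolding hg_def by measurable
  have hf0: "0 \<le> hf x" "0 \<le> hg x" for x unfolding hf_def hg_def using f0[of x] g0[of x] by auto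
  have "density ?m (\<lambda>x. ennreal (hf x)) = density m (\<lambda>x. ennreal (f x + g x) * ennreal (hf x))"
    by (rule density_density_eq) auto
  also have "\<dots> = ?r"
  proof -
    have "ennreal (f x + g x) * ennreal (hf x) = ennreal (f x)" for x
    proof -
      have e: "(f x + g x) * hf x = f x" using f0[of x] g0[of x] by (auto simp: hf_def)
      show ?thesis
        using f0[of x] g0[of x] hf0[of x] e by (metis add_nonneg_nonneg ennreal_mult)
    qed
    then show ?thesis by simp
  qed
  finally have d1: "density ?m (\<lambda>x. ennreal (hf x)) = ?r" .
  have "density ?m (\<lambda>x. ennreal (hg x)) = density m (\<lambda>x. ennreal (f x + g x) * ennreal (hg x))"
    by (rule density_density_eq) auto
  also have "\<dots> = ?e"
  proof -
    have "ennreal (f x + g x) * ennreal (hg x) = ennreal (g x)" for x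
    proof -
      have e: "(f x + g x) * hg x = g x" using f0[of x] g0[of x] by (auto simp: hg_def)
      show ?thesis
        using f0[of x] g0[of x] hf0[of x] e by (metis add_nonneg_nonneg ennreal_mult)
    qed
    then show ?thesis by simp
  qed
  finally have d2: "density ?m (\<lambda>x. ennreal (hg x)) = ?e" .
  have ae1: "AE x in ?m. ennreal (hf x) = RN_deriv ?m ?r x"
    by (rule M.RN_deriv_unique[OF _ d1]) simp
  have ae2: "AE x in ?m. ennreal (hg x) = RN_deriv ?m ?e x"
    by (rule M.RN_deriv_unique[OF _ d2]) simp
  have "hellinger ?r ?e = (\<integral>x. sqrt (enn2real (RN_deriv ?m ?r x) * enn2real (RN_deriv ?m ?e x)) \<partial>?m)"
    unfolding hellinger_def hd Let_def by (rule refl)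
  also have "\<dots> = (\<integral>x. sqrt (hf x * hg x) \<partial>?m)"
  proof (rule integral_cong_AE)
    show "AE x in ?m. sqrt (enn2real (RN_deriv ?m ?r x) * enn2real (RN_deriv ?m ?e x)) = sqrt (hf x * hg x)"
      using ae1 ae2
    proof eventually_elim
      case (elim x)
      then show ?case using hf0[of x] by (metis enn2real_ennreal)
    qed
  qed auto
  also have "\<dots> = (\<integral>x. (f x + g x) * sqrt (hf x * hg x) \<partial>m)"
    using f0 g0 by (subst integral_density) auto
  also have "\<dots> = (\<integral>x. sqrt (f x * g x) \<partial>m)"
  proof (rule Bochner_Integration.integral_cong)
    fix x
    show "(f x + g x) * sqrt (hf x * hg x) = sqrt (f x * g x)"
    proof (cases "f x + g x = 0")
      case True then show ?thesis using f0[of x] g0[of x] by (simp add: hf_def hg_def)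
    next
      case False
      then have p: "f x + g x > 0" using f0[of x] g0[of x] by auto
      have "hf x * hg x = (f x * g x) / (f x + g x)^2" using False
        by (simp add: hf_def hg_def power2_eq_square)
      then have "sqrt (hf x * hg x) = sqrt (f x * g x) / (f x + g x)"
        using p by (simp add: real_sqrt_divide)
      then show ?thesis using p by simp
    qed
  qed simp
  finally show ?thesis .
qed

lemma distr_density_transport:
  fixes f :: "'a \<Rightarrow> real"
  assumes f[measurable]: "f \<in> borel_measurable m"
    and phi[measurable]: "\<phi> \<in> measurable m N" and psi[measurable]: "\<psi> \<in> measurable N m"
    and ae: "AE x in m. \<psi> (\<phi> x) = x"
  shows "distr (density m (\<lambda>x. ennreal (f x))) N \<phi> = density (distr m N \<phi>) (\<lambda>y. ennreal (f (\<psi> y)))"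
proof (rule measure_eqI)
  show "sets (distr (density m (\<lambda>x. ennreal (f x))) N \<phi>) = sets (density (distr m N \<phi>) (\<lambda>y. ennreal (f (\<psi> y))))"
    by simp
  fix B assume "B \<in> sets (distr (density m (\<lambda>x. ennreal (f x))) N \<phi>)"
  then have B[measurable]: "B \<in> sets N" by simp
  have phi': "\<phi> \<in> measurable (density m (\<lambda>x. ennreal (f x))) N" by simp
  have "emeasure (distr (density m (\<lambda>x. ennreal (f x))) N \<phi>) B
      = emeasure (density m (\<lambda>x. ennreal (f x))) (\<phi> -` B \<inter> space m)"
    using emeasure_distr[OF phi' B] by simp
  also have "\<dots> = (\<integral>\<^sup>+x. ennreal (f x) * indicator (\<phi> -` B \<inter> space m) x \<partial>m)"
    by (rule emeasure_density) (auto intro!: measurable_sets[OF phi B])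
  also have "\<dots> = (\<integral>\<^sup>+x. ennreal (f (\<psi> (\<phi> x))) * indicator B (\<phi> x) \<partial>m)"
  proof (rule nn_integral_cong_AE)
    show "AE x in m. ennreal (f x) * indicator (\<phi> -` B \<inter> space m) x = ennreal (f (\<psi> (\<phi> x))) * indicator B (\<phi> x)"
      using ae by (rule AE_mp) (auto intro!: AE_I2 simp: indicator_def)
  qed
  also have "\<dots> = (\<integral>\<^sup>+y. ennreal (f (\<psi> y)) * indicator B y \<partial>distr m N \<phi>)"
    by (rule nn_integral_distr[symmetric]) auto
  also have "\<dots> = emeasure (density (distr m N \<phi>) (\<lambda>y. ennreal (f (\<psi> y)))) B"
    by (rule emeasure_density[symmetric]) auto
  finally show "emeasure (distr (density m (\<lambda>x. ennreal (f x))) N \<phi>) B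
      = emeasure (density (distr m N \<phi>) (\<lambda>y. ennreal (f (\<psi> y)))) B" .
qed

lemma hellinger_transport:
  fixes f g :: "'a \<Rightarrow> real"
  assumes fm: "finite_measure m"
    and f[measurable]: "f \<in> borel_measurable m" and g[measurable]: "g \<in> borel_measurable m"
    and f0: "\<And>x. 0 \<le> f x" and g0: "\<And>x. 0 \<le> g x"
    and fi: "integrable m f" and gi: "integrable m g"
    and phi[measurable]: "\<phi> \<in> measurable m N" and psi[measurable]: "\<psi> \<in> measurable N m"
    and ae: "AE x in m. \<psi> (\<phi> x) = x"
  shows "hellinger (distr (density m (\<lambda>x. ennreal (f x))) N \<phi>) (distr (density m (\<lambda>x. ennreal (g x))) N \<phi>)
       = (\<integral>x. sqrt (f x * g x) \<partial>m)"
proof -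
  let ?D = "distr m N \<phi>"
  have fmD: "finite_measure ?D" using fm by (intro finite_measure.finite_measure_distr) auto
  have mD: "measurable ?D M = measurable N M" for M by (rule measurable_cong_sets) simp_all
  have fD: "(\<lambda>y. f (\<psi> y)) \<in> borel_measurable ?D" and gD: "(\<lambda>y. g (\<psi> y)) \<in> borel_measurable ?D"
    unfolding mD by auto
  have fiD: "integrable ?D (\<lambda>y. f (\<psi> y))"
  proof -
    have "integrable m (\<lambda>x. f (\<psi> (\<phi> x)))"
    proof (rule integrable_cong_AE_imp[OF fi])
      show "AE x in m. f x = f (\<psi> (\<phi> x))" using ae by (rule AE_mp) (auto intro!: AE_I2)
    qed simp
    then show ?thesis by (subst integrable_distr_eq) simp_all
  qed
  have giD: "integrable ?D (\<lambda>y. g (\<psi> y))"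
  proof -
    have "integrable m (\<lambda>x. g (\<psi> (\<phi> x)))"
    proof (rule integrable_cong_AE_imp[OF gi])
      show "AE x in m. g x = g (\<psi> (\<phi> x))" using ae by (rule AE_mp) (auto intro!: AE_I2)
    qed simp
    then show ?thesis by (subst integrable_distr_eq) simp_all
  qed
  have "hellinger (distr (density m (\<lambda>x. ennreal (f x))) N \<phi>) (distr (density m (\<lambda>x. ennreal (g x))) N \<phi>)
      = hellinger (density ?D (\<lambda>y. ennreal (f (\<psi> y)))) (density ?D (\<lambda>y. ennreal (g (\<psi> y))))"
    by (simp add: distr_density_transport[OF f phi psi ae] distr_density_transport[OF g phi psi ae])
  also have "\<dots> = (\<integral>y. sqrt (f (\<psi> y) * g (\<psi> y)) \<partial>?D)"
    by (rule hellinger_density[OF fmD fD gD f0 g0 fiD giD])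
  also have "\<dots> = (\<integral>x. sqrt (f (\<psi> (\<phi> x)) * g (\<psi> (\<phi> x))) \<partial>m)"
    by (rule integral_distr) simp_all
  also have "\<dots> = (\<integral>x. sqrt (f x * g x) \<partial>m)"
  proof (rule integral_cong_AE)
    show "AE x in m. sqrt (f (\<psi> (\<phi> x)) * g (\<psi> (\<phi> x))) = sqrt (f x * g x)"
      using ae by (rule AE_mp) (auto intro!: AE_I2)
  qed simp_all
  finally show ?thesis .
qed

lemma hell_dom_emeasure:
  assumes se: "sets \<eta> = sets \<rho>" and A: "A \<in> sets \<rho>"
  shows "emeasure (hell_dom \<rho> \<eta>) A = emeasure \<rho> A + emeasure \<eta> A"
proof -
  have ca: "countably_additive (sets \<rho>) (\<lambda>A. emeasure \<rho> A + emeasure \<eta> A)"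
    unfolding countably_additive_def
  proof (intro allI impI)
    fix F :: "nat \<Rightarrow> _" assume F: "range F \<subseteq> sets \<rho>" "disjoint_family F" "\<Union> (range F) \<in> sets \<rho>"
    have "(\<Sum>i. emeasure \<rho> (F i) + emeasure \<eta> (F i)) = (\<Sum>i. emeasure \<rho> (F i)) + (\<Sum>i. emeasure \<eta> (F i))"
      by (rule suminf_add[symmetric]) auto
    also have "\<dots> = emeasure \<rho> (\<Union>i. F i) + emeasure \<eta> (\<Union>i. F i)"
      using F se by (simp add: suminf_emeasure)
    finally show "(\<Sum>i. emeasure \<rho> (F i) + emeasure \<eta> (F i)) = emeasure \<rho> (\<Union> (range F)) + emeasure \<eta> (\<Union> (range F))" .
  qed
  have pos: "positive (sets \<rho>) (\<lambda>A. emeasure \<rho> A + emeasure \<eta> A)"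
    unfolding positive_def by simp
  show ?thesis unfolding hell_dom_def
    by (rule emeasure_measure_of_sigma[OF sets.sigma_algebra_axioms pos ca A])
qed

lemma sets_hell_dom [simp]: "sets (hell_dom \<rho> \<eta>) = sets \<rho>"
  unfolding hell_dom_def by (simp add: sets.space_closed sets.sigma_sets_eq)

lemma space_hell_dom [simp]: "space (hell_dom \<rho> \<eta>) = space \<rho>"
  unfolding hell_dom_def by (simp add: sets.space_closed)

lemma hellinger_rep:
  assumes P: "prob_space \<rho>" and Q: "prob_space \<eta>" and se: "sets \<eta> = sets \<rho>"
  obtains m f g where "finite_measure m" "sets m = sets \<rho>" "space m = space \<rho>"
    "f \<in> borel_measurable m" "g \<in> borel_measurable m" "\<And>x. 0 \<le> f x" "\<And>x. 0 \<le> g x"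
    "integrable m f" "integrable m g"
    "\<rho> = density m (\<lambda>x. ennreal (f x))" "\<eta> = density m (\<lambda>x. ennreal (g x))"
    "hellinger \<rho> \<eta> = (\<integral>x. sqrt (f x * g x) \<partial>m)"
proof -
  interpret P: prob_space \<rho> by fact
  interpret Q: prob_space \<eta> by fact
  define m where "m = hell_dom \<rho> \<eta>"
  have sm[simp]: "sets m = sets \<rho>" and spm[simp]: "space m = space \<rho>" unfolding m_def by simp_all
  have em: "emeasure m A = emeasure \<rho> A + emeasure \<eta> A" if "A \<in> sets \<rho>" for A
    unfolding m_def using hell_dom_emeasure[OF se that] .
  have spe: "space \<eta> = space \<rho>" by (rule sets_eq_imp_space_eq[OF se])
  have "emeasure m (space m) \<noteq> \<infinity>" using em[of "space \<rho>"] spe Q.emeasure_space_1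
    by (simp add: P.emeasure_space_1)
  then have fm: "finite_measure m" by (intro finite_measureI)
  then interpret M: finite_measure m .
  have acP: "absolutely_continuous m \<rho>"
    unfolding absolutely_continuous_def
  proof
    fix A assume "A \<in> null_sets m"
    then have "A \<in> sets \<rho>" "emeasure m A = 0" by auto
    then show "A \<in> null_sets \<rho>" using em[of A] by auto
  qed
  have acQ: "absolutely_continuous m \<eta>"
    unfolding absolutely_continuous_def
  proof
    fix A assume "A \<in> null_sets m"
    then have "A \<in> sets \<rho>" "emeasure m A = 0" by auto
    then show "A \<in> null_sets \<eta>" using em[of A] se by auto
  qed
  define f where "f x = enn2real (RN_deriv m \<rho> x)" for x
  define g where "g x = enn2real (RN_deriv m \<eta> x)" for x
  have fm1[measurable]: "f \<in> borel_measurable m" "g \<in> borel_measurable m" unfolding f_def g_def by auto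
  have f0: "0 \<le> f x" "0 \<le> g x" for x unfolding f_def g_def by auto
  have dP: "density m (\<lambda>x. ennreal (f x)) = \<rho>"
  proof -
    have "density m (\<lambda>x. ennreal (f x)) = density m (RN_deriv m \<rho>)"
    proof (rule density_cong)
      show "AE x in m. ennreal (f x) = RN_deriv m \<rho> x"
        using M.RN_deriv_finite[OF P.sigma_finite_measure_axioms acP] 
        by (rule AE_mp) (auto intro!: AE_I2 simp: f_def ennreal_enn2real_if)
    qed auto
    also have "\<dots> = \<rho>" by (rule M.density_RN_deriv[OF acP]) simp
    finally show ?thesis .
  qed
  have dQ: "density m (\<lambda>x. ennreal (g x)) = \<eta>"
  proof -
    have "density m (\<lambda>x. ennreal (g x)) = density m (RN_deriv m \<eta>)"
    proof (rule density_cong)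
      show "AE x in m. ennreal (g x) = RN_deriv m \<eta> x"
        using M.RN_deriv_finite[OF Q.sigma_finite_measure_axioms acQ] se
        by (rule_tac AE_mp) (auto intro!: AE_I2 simp: g_def ennreal_enn2real_if)
    qed auto
    also have "\<dots> = \<eta>" by (rule M.density_RN_deriv[OF acQ]) (simp add: se)
    finally show ?thesis .
  qed
  have fi: "integrable m f"
  proof -
    have "(\<integral>\<^sup>+x. ennreal (norm (f x)) \<partial>m) = emeasure (density m (\<lambda>x. ennreal (f x))) (space m)"
      using f0 by (subst emeasure_density) (auto intro!: nn_integral_cong simp: indicator_def)
    also have "\<dots> = 1" using dP P.emeasure_space_1 by simp
    finally show ?thesis by (simp add: integrable_iff_bounded)
  qed
  have gi: "integrable m g"
  proof -
    have "(\<integral>\<^sup>+x. ennreal (norm (g x)) \<partial>m) = emeasure (density m (\<lambda>x. ennreal (g x))) (space m)"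
      using f0 by (subst emeasure_density) (auto intro!: nn_integral_cong simp: indicator_def)
    also have "\<dots> = 1" using dQ Q.emeasure_space_1 spe by simp
    finally show ?thesis by (simp add: integrable_iff_bounded)
  qed
  have "hellinger \<rho> \<eta> = (\<integral>x. sqrt (f x * g x) \<partial>m)"
    unfolding hellinger_def m_def f_def g_def Let_def by (rule refl)
  then show ?thesis using that fm f0 fi gi dP dQ by auto
qed

lemma measure_density_real:
  fixes f :: "'a \<Rightarrow> real"
  assumes f[measurable]: "f \<in> borel_measurable m" and f0: "\<And>x. 0 \<le> f x" and fi: "integrable m f"
    and A[measurable]: "A \<in> sets m"
  shows "measure (density m (\<lambda>x. ennreal (f x))) A = (\<integral>x. f x * indicator A x \<partial>m)"
proof -
  have "(\<integral>x. f x * indicator A x \<partial>m) = enn2real (\<integral>\<^sup>+x. ennreal (f x * indicator A x) \<partial>m)"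
    using f0 by (subst integral_eq_nn_integral) auto
  also have "(\<integral>\<^sup>+x. ennreal (f x * indicator A x) \<partial>m) = emeasure (density m (\<lambda>x. ennreal (f x))) A"
    using f0 by (subst emeasure_density) (auto intro!: nn_integral_cong simp: indicator_def)
  finally show ?thesis by (simp add: measure_def)
qed

lemma integral_singleton_real:
  fixes h :: "'a \<Rightarrow> real"
  assumes fm: "finite_measure m" and z: "{z} \<in> sets m"
  shows "(\<integral>x. h x * indicator {z} x \<partial>m) = h z * measure m {z}"
proof -
  interpret finite_measure m by fact
  have "(\<integral>x. h x * indicator {z} x \<partial>m) = (\<integral>x. h z * indicator {z} x \<partial>m)"
    by (rule Bochner_Integration.integral_cong) (auto simp: indicator_def)
  also have "\<dots> = h z * measure m {z}" using z by simp
  finally show ?thesis .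
qed

lemma hellinger_singleton_piece:
  fixes f g :: "'a \<Rightarrow> real"
  assumes fm: "finite_measure m"
    and f[measurable]: "f \<in> borel_measurable m" and g[measurable]: "g \<in> borel_measurable m"
    and f0: "\<And>x. 0 \<le> f x" and g0: "\<And>x. 0 \<le> g x"
    and fi: "integrable m f" and gi: "integrable m g" and z[measurable]: "{z} \<in> sets m"
  shows "(\<integral>x. sqrt (f x * g x) * indicator {z} x \<partial>m)
     = sqrt (measure (density m (\<lambda>x. ennreal (f x))) {z} * measure (density m (\<lambda>x. ennreal (g x))) {z})"
proof -
  have m0: "0 \<le> measure m {z}" by simp
  have "measure (density m (\<lambda>x. ennreal (f x))) {z} = f z * measure m {z}"
    using measure_density_real[OF f f0 fi z] integral_singleton_real[OF fm z] by simp
  moreover have "measure (density m (\<lambda>x. ennreal (g x))) {z} = g z * measure m {z}"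
    using measure_density_real[OF g g0 gi z] integral_singleton_real[OF fm z] by simp
  moreover have "sqrt (f z * measure m {z} * (g z * measure m {z})) = sqrt (f z * g z) * measure m {z}"
    using m0 by (simp add: real_sqrt_mult)
  ultimately show ?thesis using integral_singleton_real[OF fm z] by simp
qed

lemma cond_measure_density:
  fixes f :: "'a \<Rightarrow> real"
  assumes fm: "finite_measure m" and f[measurable]: "f \<in> borel_measurable m" and f0: "\<And>x. 0 \<le> f x"
    and fi: "integrable m f" and A[measurable]: "A \<in> sets m"
    and a: "measure (density m (\<lambda>x. ennreal (f x))) A > 0"
  shows "cond_measure (density m (\<lambda>x. ennreal (f x))) A
       = density (density m (indicator A)) (\<lambda>x. ennreal (f x / measure (density m (\<lambda>x. ennreal (f x))) A))"
proof -
  let ?a = "measure (density m (\<lambda>x. ennreal (f x))) A"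
  have "emeasure (density m (\<lambda>x. ennreal (f x))) (space m) < \<infinity>"
    using fi f0 by (simp add: emeasure_density integrable_iff_bounded)
  then have "finite_measure (density m (\<lambda>x. ennreal (f x)))" by (intro finite_measureI) auto
  then have ea: "emeasure (density m (\<lambda>x. ennreal (f x))) A = ennreal ?a"
    by (simp add: finite_measure.emeasure_eq_measure)
  have "cond_measure (density m (\<lambda>x. ennreal (f x))) A
      = density m (\<lambda>x. ennreal (f x) * (indicator A x / ennreal ?a))"
    unfolding cond_measure_def ea by (subst density_density_eq) auto
  also have "\<dots> = density m (\<lambda>x. indicator A x * ennreal (f x / ?a))"
  proof -
    have "ennreal (f x) * (indicator A x / ennreal ?a) = indicator A x * ennreal (f x / ?a)" for x
    proof (cases "x \<in> A")
      case True
      have "ennreal (f x) * (1 / ennreal ?a) = ennreal (f x) / ennreal ?a"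
        by (simp add: ennreal_times_divide)
      also have "\<dots> = ennreal (f x / ?a)" using a f0[of x] by (simp add: divide_ennreal)
      finally show ?thesis using True by simp
    qed simp
    then show ?thesis by simp
  qed
  also have "\<dots> = density (density m (indicator A)) (\<lambda>x. ennreal (f x / ?a))"
    by (subst density_density_eq) auto
  finally show ?thesis .
qed

lemma hellinger_cond_piece:
  fixes f g :: "'a \<Rightarrow> real"
  assumes fm: "finite_measure m"
    and f[measurable]: "f \<in> borel_measurable m" and g[measurable]: "g \<in> borel_measurable m"
    and f0: "\<And>x. 0 \<le> f x" and g0: "\<And>x. 0 \<le> g x"
    and fi: "integrable m f" and gi: "integrable m g" and A[measurable]: "A \<in> sets m"
    and a: "measure (density m (\<lambda>x. ennreal (f x))) A > 0"
    and b: "measure (density m (\<lambda>x. ennreal (g x))) A > 0"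
    and phi[measurable]: "\<phi> \<in> measurable m N" and psi[measurable]: "\<psi> \<in> measurable N m"
    and inv: "\<And>x. x \<in> A \<Longrightarrow> x \<in> space m \<Longrightarrow> \<psi> (\<phi> x) = x"
  shows "sqrt (measure (density m (\<lambda>x. ennreal (f x))) A * measure (density m (\<lambda>x. ennreal (g x))) A)
      * hellinger (distr (cond_measure (density m (\<lambda>x. ennreal (f x))) A) N \<phi>)
                  (distr (cond_measure (density m (\<lambda>x. ennreal (g x))) A) N \<phi>)
     = (\<integral>x. sqrt (f x * g x) * indicator A x \<partial>m)"
proof -
  let ?a = "measure (density m (\<lambda>x. ennreal (f x))) A"
  let ?b = "measure (density m (\<lambda>x. ennreal (g x))) A"
  let ?mA = "density m (indicator A) :: 'a measure"
  have ind: "(indicator A :: 'a \<Rightarrow> ennreal) = (\<lambda>x. ennreal (indicator A x))"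
    by (auto simp: indicator_def)
  have fmA: "finite_measure ?mA"
  proof -
    interpret finite_measure m by fact
    have "emeasure ?mA (space m) = (\<integral>\<^sup>+x. indicator A x * indicator (space m) x \<partial>m)"
      by (rule emeasure_density) auto
    also have "\<dots> = (\<integral>\<^sup>+x. indicator A x \<partial>m)"
      by (rule nn_integral_cong) (auto simp: indicator_def)
    also have "\<dots> = emeasure m A" by simp
    finally show ?thesis by (intro finite_measureI) simp
  qed
  have mA: "measurable ?mA M = measurable m M" "measurable M ?mA = measurable M m" for M
    by (rule measurable_cong_sets; simp)+
  have fa[measurable]: "(\<lambda>x. f x / ?a) \<in> borel_measurable ?mA" and gb[measurable]: "(\<lambda>x. g x / ?b) \<in> borel_measurable ?mA"
    unfolding mA by auto
  have fa0: "\<And>x. 0 \<le> f x / ?a" and gb0: "\<And>x. 0 \<le> g x / ?b" using f0 g0 by auto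
  have fai: "integrable ?mA (\<lambda>x. f x / ?a)"
    unfolding ind
  proof (subst integrable_density)
    show "integrable m (\<lambda>x. indicator A x *\<^sub>R (f x / ?a))"
      by (rule integrable_mult_indicator[OF A]) (use fi in auto)
  qed auto
  have gbi: "integrable ?mA (\<lambda>x. g x / ?b)"
    unfolding ind
  proof (subst integrable_density)
    show "integrable m (\<lambda>x. indicator A x *\<^sub>R (g x / ?b))"
      by (rule integrable_mult_indicator[OF A]) (use gi in auto)
  qed auto
  have phiA: "\<phi> \<in> measurable ?mA N" and psiA: "\<psi> \<in> measurable N ?mA" unfolding mA by auto
  have ae: "AE x in ?mA. \<psi> (\<phi> x) = x"
    by (subst AE_density) (auto intro!: AE_I2 simp: inv indicator_def)
  have "hellinger (distr (cond_measure (density m (\<lambda>x. ennreal (f x))) A) N \<phi>)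
                  (distr (cond_measure (density m (\<lambda>x. ennreal (g x))) A) N \<phi>)
      = hellinger (distr (density ?mA (\<lambda>x. ennreal (f x / ?a))) N \<phi>) (distr (density ?mA (\<lambda>x. ennreal (g x / ?b))) N \<phi>)"
    using cond_measure_density[OF fm f f0 fi A a] cond_measure_density[OF fm g g0 gi A b] by simp
  also have "\<dots> = (\<integral>x. sqrt (f x / ?a * (g x / ?b)) \<partial>?mA)"
    by (rule hellinger_transport[OF fmA fa gb fa0 gb0 fai gbi phiA psiA ae])
  also have "\<dots> = (\<integral>x. indicator A x * sqrt (f x / ?a * (g x / ?b)) \<partial>m)"
    unfolding ind by (subst integral_density) auto
  also have "\<dots> = (\<integral>x. (sqrt (f x * g x) * indicator A x) / sqrt (?a * ?b) \<partial>m)"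
    by (rule Bochner_Integration.integral_cong) (auto simp: real_sqrt_divide real_sqrt_mult indicator_def)
  also have "\<dots> = (\<integral>x. sqrt (f x * g x) * indicator A x \<partial>m) / sqrt (?a * ?b)"
    by simp
  finally show ?thesis using a b by simp
qed

lemma hellinger_le_1:
  assumes P: "prob_space \<rho>" and Q: "prob_space \<eta>" and se: "sets \<eta> = sets \<rho>"
  shows "hellinger \<rho> \<eta> \<le> 1"
proof -
  obtain m f g where fm: "finite_measure m" and sm: "sets m = sets \<rho>" "space m = space \<rho>"
    and f[measurable]: "f \<in> borel_measurable m" and g[measurable]: "g \<in> borel_measurable m"
    and f0: "\<And>x. 0 \<le> f x" and g0: "\<And>x. 0 \<le> g x" and fi: "integrable m f" and gi: "integrable m g"
    and dr: "\<rho> = density m (\<lambda>x. ennreal (f x))" and de: "\<eta> = density m (\<lambda>x. ennreal (g x))"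
    and H: "hellinger \<rho> \<eta> = (\<integral>x. sqrt (f x * g x) \<partial>m)"
    using hellinger_rep[OF P Q se] by blast
  have sp: "space m \<in> sets m" by simp
  have 1: "(\<integral>x. f x \<partial>m) = 1"
  proof -
    have "(\<integral>x. f x \<partial>m) = (\<integral>x. f x * indicator (space m) x \<partial>m)"
      by (rule Bochner_Integration.integral_cong) auto
    also have "\<dots> = measure \<rho> (space m)" using measure_density_real[OF f f0 fi sp] dr by simp
    finally show ?thesis using prob_space.prob_space[OF P] sm by simp
  qed
  have 2: "(\<integral>x. g x \<partial>m) = 1"
  proof -
    have "(\<integral>x. g x \<partial>m) = (\<integral>x. g x * indicator (space m) x \<partial>m)"
      by (rule Bochner_Integration.integral_cong) auto
    also have "\<dots> = measure \<eta> (space m)" using measure_density_real[OF g g0 gi sp] de by simp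
    finally show ?thesis using prob_space.prob_space[OF Q] sm sets_eq_imp_space_eq[OF se] by simp
  qed
  have gm: "\<And>x. sqrt (f x * g x) \<le> (f x + g x) / 2" using arith_geo_mean_sqrt f0 g0 by blast
  have gm2: "\<And>x. sqrt (f x * g x) * 2 \<le> f x + g x" using gm by (metis le_divide_eq_numeral1(1))
  have "(\<integral>x. sqrt (f x * g x) \<partial>m) \<le> (\<integral>x. (f x + g x) / 2 \<partial>m)"
  proof (rule integral_mono)
    show "integrable m (\<lambda>x. sqrt (f x * g x))"
      by (rule Bochner_Integration.integrable_bound[of _ "\<lambda>x. (f x + g x) / 2"])
         (auto intro!: fi gi AE_I2 simp: f0 g0 gm gm2)
    show "sqrt (f x * g x) \<le> (f x + g x) / 2" for x using gm by simp
  qed (auto intro!: fi gi)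
  also have "\<dots> = 1" using 1 2 fi gi by simp
  finally show ?thesis using H by simp
qed

definition SBf :: "real \<Rightarrow> real set set set" where
  "SBf t = {{Z \<in> closed_sets_on t. Z \<inter> K = {}} | K. K \<subseteq> {0..t} \<and> compact K}
      \<union> {{Z \<in> closed_sets_on t. Z \<inter> G \<noteq> {}} | G. openin (top_of_set {0..t}) G}"

lemma fell_SBf: "fell_topology t = topology_generated_by (SBf t)"
  unfolding fell_topology_def SBf_def by simp

lemma SBf_Pow: "SBf t \<subseteq> Pow (closed_sets_on t)"
  unfolding SBf_def by auto

lemma fell_open_sub: "openin (fell_topology t) U \<Longrightarrow> U \<subseteq> closed_sets_on t"
  using openin_subset[of "fell_topology t" U] SBf_Pow[of t] unfolding fell_SBf by auto

lemma space_Cmeas [simp]: "space (Cmeas t) = closed_sets_on t"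
  unfolding Cmeas_def using fell_open_sub by (intro space_measure_of) auto

lemma closed_sets_on_sub: "Z \<in> closed_sets_on t \<Longrightarrow> Z \<subseteq> {0..t}"
  and closed_sets_on_closed: "Z \<in> closed_sets_on t \<Longrightarrow> closed Z"
  unfolding closed_sets_on_def by auto

definition MissR :: "real \<Rightarrow> real \<Rightarrow> real \<Rightarrow> real set set" where
  "MissR t a b = {Z \<in> closed_sets_on t. Z \<inter> {a..b} = {}}"
definition HitR :: "real \<Rightarrow> real \<Rightarrow> real \<Rightarrow> real set set" where
  "HitR t a b = {Z \<in> closed_sets_on t. Z \<inter> {a<..<b} \<noteq> {}}"

definition RR :: "real \<Rightarrow> real set set set" where
  "RR t = (\<lambda>(a,b). MissR t a b) ` (\<rat> \<times> \<rat>) \<union> (\<lambda>(a,b). HitR t a b) ` (\<rat> \<times> \<rat>)"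

definition BB :: "real \<Rightarrow> real set set set" where
  "BB t = (\<lambda>F. closed_sets_on t \<inter> \<Inter>F) ` {F. finite F \<and> F \<subseteq> RR t}"

lemma countable_BB: "countable (BB t)"
proof -
  have cq: "countable (\<rat> :: real set)" unfolding Rats_def by simp
  have "countable ((\<rat> :: real set) \<times> (\<rat> :: real set))" using cq by (intro countable_SIGMA) auto
  then have "countable (RR t)" using cq unfolding RR_def by auto
  then show ?thesis unfolding BB_def by (intro countable_image countable_Collect_finite_subset)
qed

lemma RR_SBf: "RR t \<subseteq> SBf t"
proof
  fix X assume "X \<in> RR t"
  then obtain a b where "X = MissR t a b \<or> X = HitR t a b" unfolding RR_def by auto
  then show "X \<in> SBf t"
  proof
    assume X: "X = MissR t a b"
    have "X = {Z \<in> closed_sets_on t. Z \<inter> ({a..b} \<inter> {0..t}) = {}}"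
      unfolding X MissR_def using closed_sets_on_sub by blast
    moreover have "compact ({a..b} \<inter> {0..t})" by (simp add: compact_Int_closed)
    ultimately show ?thesis unfolding SBf_def by blast
  next
    assume X: "X = HitR t a b"
    have "X = {Z \<in> closed_sets_on t. Z \<inter> ({a<..<b} \<inter> {0..t}) \<noteq> {}}"
      unfolding X HitR_def using closed_sets_on_sub by blast
    moreover have "openin (top_of_set {0..t}) ({a<..<b} \<inter> {0..t})"
      using openin_open_Int[of "{a<..<b}" "{0..t}"] by (simp add: Int_commute)
    ultimately show ?thesis unfolding SBf_def by blast
  qed
qed

lemma BB_sigma: "BB t \<subseteq> sigma_sets (closed_sets_on t) (SBf t)"
proof
  fix X assume "X \<in> BB t"
  then obtain F where F: "finite F" "F \<subseteq> RR t" and X: "X = closed_sets_on t \<inter> \<Inter>F"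
    unfolding BB_def by auto
  interpret S: sigma_algebra "closed_sets_on t" "sigma_sets (closed_sets_on t) (SBf t)"
    using sigma_algebra_sigma_sets[OF SBf_Pow] .
  have "closed_sets_on t \<inter> \<Inter>F \<in> sigma_sets (closed_sets_on t) (SBf t)"
    using F
  proof (induction F rule: finite_induct)
    case empty
    then show ?case using S.top by simp
  next
    case (insert x F)
    have "x \<in> sigma_sets (closed_sets_on t) (SBf t)" using insert RR_SBf by auto
    then have "x \<inter> (closed_sets_on t \<inter> \<Inter>F) \<in> sigma_sets (closed_sets_on t) (SBf t)"
      using S.Int[OF _ insert.IH] insert.prems by auto
    moreover have "closed_sets_on t \<inter> \<Inter>(insert x F) = x \<inter> (closed_sets_on t \<inter> \<Inter>F)" by auto
    ultimately show ?case by (simp only:)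
  qed
  then show "X \<in> sigma_sets (closed_sets_on t) (SBf t)" using X by simp
qed

lemma BB_Int: "x \<in> BB t \<Longrightarrow> y \<in> BB t \<Longrightarrow> x \<inter> y \<in> BB t"
proof -
  assume "x \<in> BB t" "y \<in> BB t"
  then obtain F1 F2 where "finite F1" "F1 \<subseteq> RR t" "x = closed_sets_on t \<inter> \<Inter>F1"
    "finite F2" "F2 \<subseteq> RR t" "y = closed_sets_on t \<inter> \<Inter>F2" unfolding BB_def by auto
  then have "x \<inter> y = closed_sets_on t \<inter> \<Inter>(F1 \<union> F2)" "finite (F1 \<union> F2)" "F1 \<union> F2 \<subseteq> RR t" by auto
  then show ?thesis unfolding BB_def by blast
qed

lemma rat_around:
  fixes z e :: real assumes "e > 0"
  obtains a b where "a \<in> \<rat>" "b \<in> \<rat>" "z - e < a" "a < z" "z < b" "b < z + e"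
proof -
  obtain a where "a \<in> \<rat>" "z - e < a" "a < z" using Rats_dense_in_real[of "z - e" z] assms by auto
  moreover obtain b where "b \<in> \<rat>" "z < b" "b < z + e" using Rats_dense_in_real[of z "z + e"] assms by auto
  ultimately show ?thesis using that by blast
qed

lemma SBf_local:
  assumes s: "s \<in> SBf t" and Z: "Z \<in> s"
  shows "\<exists>b\<in>BB t. Z \<in> b \<and> b \<subseteq> s"
  using s unfolding SBf_def
proof (elim UnE CollectE exE conjE)
  fix K assume sK: "s = {Z \<in> closed_sets_on t. Z \<inter> K = {}}" and Kt: "K \<subseteq> {0..t}" and K: "compact K"
  have Zc: "Z \<in> closed_sets_on t" and ZK: "Z \<inter> K = {}" using Z sK by auto
  have cZ: "closed Z" using Zc closed_sets_on_closed by auto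
  have "\<forall>k\<in>K. \<exists>ab. fst ab \<in> \<rat> \<and> snd ab \<in> \<rat> \<and> fst ab < k \<and> k < snd ab \<and> {fst ab..snd ab} \<inter> Z = {}"
  proof
    fix k assume k: "k \<in> K"
    then have "k \<in> - Z" using ZK by auto
    moreover have "open (- Z)" using cZ by auto
    ultimately obtain e where e: "e > 0" "ball k e \<subseteq> - Z" by (meson openE)
    obtain a b where ab: "a \<in> \<rat>" "b \<in> \<rat>" "k - e < a" "a < k" "k < b" "b < k + e"
      using rat_around[OF e(1), of k] by blast
    have "{a..b} \<subseteq> ball k e" using ab by (auto simp: dist_real_def)
    then have "{a..b} \<inter> Z = {}" using e by auto
    then show "\<exists>ab. fst ab \<in> \<rat> \<and> snd ab \<in> \<rat> \<and> fst ab < k \<and> k < snd ab \<and> {fst ab..snd ab} \<inter> Z = {}"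
      using ab by (intro exI[of _ "(a,b)"]) auto
  qed
  then obtain AB where AB: "\<forall>k\<in>K. fst (AB k) \<in> \<rat> \<and> snd (AB k) \<in> \<rat> \<and> fst (AB k) < k \<and> k < snd (AB k)
      \<and> {fst (AB k)..snd (AB k)} \<inter> Z = {}" by metis
  have "K \<subseteq> (\<Union>k\<in>K. {fst (AB k)<..<snd (AB k)})" using AB by auto
  then obtain T where T: "T \<subseteq> K" "finite T" "K \<subseteq> (\<Union>k\<in>T. {fst (AB k)<..<snd (AB k)})"
    using compactE_image[OF K, of K "\<lambda>k. {fst (AB k)<..<snd (AB k)}"] by auto
  define F where "F = (\<lambda>k. MissR t (fst (AB k)) (snd (AB k))) ` T"
  have F: "finite F" "F \<subseteq> RR t" unfolding F_def RR_def using T AB by (auto intro!: imageI)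
  have b: "closed_sets_on t \<inter> \<Inter>F \<in> BB t" unfolding BB_def using F by auto
  have "Z \<in> closed_sets_on t \<inter> \<Inter>F" using Zc AB T unfolding F_def MissR_def by auto
  moreover have "closed_sets_on t \<inter> \<Inter>F \<subseteq> s"
  proof
    fix W assume W: "W \<in> closed_sets_on t \<inter> \<Inter>F"
    have "W \<inter> K = {}"
    proof (rule ccontr)
      assume "W \<inter> K \<noteq> {}"
      then obtain w where w: "w \<in> W" "w \<in> K" by auto
      then obtain k where "k \<in> T" "w \<in> {fst (AB k)<..<snd (AB k)}" using T by auto
      moreover have "W \<in> MissR t (fst (AB k)) (snd (AB k))" using W \<open>k \<in> T\<close> unfolding F_def by auto
      ultimately show False using w unfolding MissR_def by auto
    qed
    then show "W \<in> s" using W sK by auto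
  qed
  ultimately show "\<exists>b\<in>BB t. Z \<in> b \<and> b \<subseteq> s" using b by blast
next
  fix G assume sG: "s = {Z \<in> closed_sets_on t. Z \<inter> G \<noteq> {}}" and G: "openin (top_of_set {0..t}) G"
  have Zc: "Z \<in> closed_sets_on t" and ZG: "Z \<inter> G \<noteq> {}" using Z sG by auto
  obtain Op where Op: "open Op" "G = Op \<inter> {0..t}" using G by (auto simp: openin_open)
  obtain z where z: "z \<in> Z" "z \<in> G" using ZG by auto
  then have "z \<in> Op" using Op by auto
  then obtain e where e: "e > 0" "ball z e \<subseteq> Op" using Op(1) by (meson openE)
  obtain a b where ab: "a \<in> \<rat>" "b \<in> \<rat>" "z - e < a" "a < z" "z < b" "b < z + e"
    using rat_around[OF e(1), of z] by blast
  define F where "F = {HitR t a b}"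
  have F: "finite F" "F \<subseteq> RR t" unfolding F_def RR_def using ab by auto
  have b: "closed_sets_on t \<inter> \<Inter>F \<in> BB t" unfolding BB_def using F by auto
  have "Z \<in> closed_sets_on t \<inter> \<Inter>F" using Zc z ab unfolding F_def HitR_def by auto
  moreover have "closed_sets_on t \<inter> \<Inter>F \<subseteq> s"
  proof
    fix W assume W: "W \<in> closed_sets_on t \<inter> \<Inter>F"
    then obtain w where w: "w \<in> W" "a < w" "w < b" unfolding F_def HitR_def by auto
    have "w \<in> {0..t}" using W w closed_sets_on_sub[of W t] by auto
    moreover have "w \<in> ball z e" using w ab by (auto simp: dist_real_def)
    ultimately have "w \<in> G" using Op e by auto
    then show "W \<in> s" using W w sG by auto
  qed
  ultimately show "\<exists>b\<in>BB t. Z \<in> b \<and> b \<subseteq> s" using b by blast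
qed

lemma open_is_BB_union:
  assumes "openin (fell_topology t) U"
  shows "U = \<Union>{b \<in> BB t. b \<subseteq> U}"
proof -
  have "generate_topology_on (SBf t) U" using assms unfolding fell_SBf
    by (simp add: openin_topology_generated_by_iff)
  then show ?thesis
  proof (induction rule: generate_topology_on.induct)
    case Empty
    then show ?case by auto
  next
    case (Int a b)
    show ?case
    proof
      show "a \<inter> b \<subseteq> \<Union>{c \<in> BB t. c \<subseteq> a \<inter> b}"
      proof
        fix x assume "x \<in> a \<inter> b"
        then obtain ca cb where "ca \<in> BB t" "ca \<subseteq> a" "x \<in> ca" "cb \<in> BB t" "cb \<subseteq> b" "x \<in> cb"
          using Int.IH by blast
        then show "x \<in> \<Union>{c \<in> BB t. c \<subseteq> a \<inter> b}" using BB_Int[of ca t cb] by blast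
      qed
    qed auto
  next
    case (UN K)
    show ?case
    proof
      show "\<Union>K \<subseteq> \<Union>{c \<in> BB t. c \<subseteq> \<Union>K}"
      proof
        fix x assume "x \<in> \<Union>K"
        then obtain k where "k \<in> K" "x \<in> k" by auto
        then obtain c where "c \<in> BB t" "c \<subseteq> k" "x \<in> c" using UN.IH by blast
        then show "x \<in> \<Union>{c \<in> BB t. c \<subseteq> \<Union>K}" using \<open>k \<in> K\<close> by blast
      qed
    qed auto
  next
    case (Basis s)
    show ?case
    proof
      show "s \<subseteq> \<Union>{c \<in> BB t. c \<subseteq> s}" using SBf_local[OF Basis] by blast
    qed auto
  qed
qed

lemma sets_Cmeas: "sets (Cmeas t) = sigma_sets (closed_sets_on t) (SBf t)"
proof -
  have op: "{U. openin (fell_topology t) U} \<subseteq> Pow (closed_sets_on t)" using fell_open_sub by auto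
  have s: "sets (Cmeas t) = sigma_sets (closed_sets_on t) {U. openin (fell_topology t) U}"
    unfolding Cmeas_def using op by (rule sets_measure_of)
  interpret S: sigma_algebra "closed_sets_on t" "sigma_sets (closed_sets_on t) (SBf t)"
    using sigma_algebra_sigma_sets[OF SBf_Pow] .
  have 1: "{U. openin (fell_topology t) U} \<subseteq> sigma_sets (closed_sets_on t) (SBf t)"
  proof
    fix U assume "U \<in> {U. openin (fell_topology t) U}"
    then have U: "U = \<Union>{b \<in> BB t. b \<subseteq> U}" using open_is_BB_union by auto
    have "\<Union>{b \<in> BB t. b \<subseteq> U} \<in> sigma_sets (closed_sets_on t) (SBf t)"
      using countable_BB BB_sigma by (intro S.countable_Union) (auto intro: countable_subset)
    then show "U \<in> sigma_sets (closed_sets_on t) (SBf t)" using U by simp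
  qed
  have 2: "SBf t \<subseteq> sigma_sets (closed_sets_on t) {U. openin (fell_topology t) U}"
  proof
    fix s assume "s \<in> SBf t"
    then have "openin (fell_topology t) s" unfolding fell_SBf
      by (simp add: openin_topology_generated_by_iff generate_topology_on.Basis)
    then show "s \<in> sigma_sets (closed_sets_on t) {U. openin (fell_topology t) U}" by auto
  qed
  show ?thesis unfolding s
    using sigma_sets_mono[OF 1] sigma_sets_mono[OF 2] by auto
qed

lemma SBf_sets: "X \<in> SBf t \<Longrightarrow> X \<in> sets (Cmeas t)"
  unfolding sets_Cmeas by auto

lemma miss_closed:
  assumes "closed C"
  shows "{Z \<in> closed_sets_on t. Z \<inter> C = {}} \<in> sets (Cmeas t)"
proof -
  have e: "{Z \<in> closed_sets_on t. Z \<inter> C = {}} = {Z \<in> closed_sets_on t. Z \<inter> (C \<inter> {0..t}) = {}}"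
    using closed_sets_on_sub by fastforce
  have c: "compact (C \<inter> {0..t})" using assms by (simp add: closed_Int_compact)
  have "{Z \<in> closed_sets_on t. Z \<inter> (C \<inter> {0..t}) = {}} \<in> SBf t"
    unfolding SBf_def by (rule UnI1, rule CollectI, rule exI[of _ "C \<inter> {0..t}"]) (use c in simp)
  then show ?thesis using e SBf_sets by simp
qed


lemma hit_open:
  assumes "open U"
  shows "{Z \<in> closed_sets_on t. Z \<inter> U \<noteq> {}} \<in> sets (Cmeas t)"
proof -
  have e: "{Z \<in> closed_sets_on t. Z \<inter> U \<noteq> {}} = {Z \<in> closed_sets_on t. Z \<inter> ({0..t} \<inter> U) \<noteq> {}}"
    using closed_sets_on_sub by fastforce
  have c: "openin (top_of_set {0..t}) ({0..t} \<inter> U)" using assms by auto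
  have "{Z \<in> closed_sets_on t. Z \<inter> ({0..t} \<inter> U) \<noteq> {}} \<in> SBf t"
    unfolding SBf_def by (rule UnI2, rule CollectI, rule exI[of _ "{0..t} \<inter> U"]) (use c in simp)
  then show ?thesis using e SBf_sets by simp
qed

lemma hit_closed:
  assumes "closed C"
  shows "{Z \<in> closed_sets_on t. Z \<inter> C \<noteq> {}} \<in> sets (Cmeas t)"
proof -
  have "{Z \<in> closed_sets_on t. Z \<inter> C \<noteq> {}} = space (Cmeas t) - {Z \<in> closed_sets_on t. Z \<inter> C = {}}"
    by auto
  moreover have "space (Cmeas t) - {Z \<in> closed_sets_on t. Z \<inter> C = {}} \<in> sets (Cmeas t)"
    by (rule sets.compl_sets[OF miss_closed[OF assms]])
  ultimately show ?thesis by simp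
qed

lemma measurable_into_Cmeas:
  assumes into: "\<And>x. x \<in> space M \<Longrightarrow> F x \<in> closed_sets_on t"
    and miss: "\<And>C. closed C \<Longrightarrow> {x \<in> space M. F x \<inter> C = {}} \<in> sets M"
    and hit: "\<And>U. open U \<Longrightarrow> {x \<in> space M. F x \<inter> U \<noteq> {}} \<in> sets M"
  shows "F \<in> measurable M (Cmeas t)"
proof -
  have sg: "sets (sigma (closed_sets_on t) (SBf t)) = sigma_sets (closed_sets_on t) (SBf t)"
    by (rule sets_measure_of[OF SBf_Pow])
  have "measurable M (Cmeas t) = measurable M (sigma (closed_sets_on t) (SBf t))"
    by (rule measurable_cong_sets) (rule refl, simp only: sets_Cmeas sg)
  moreover have "F \<in> measurable M (sigma (closed_sets_on t) (SBf t))"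
  proof (rule measurable_measure_of)
    show "SBf t \<subseteq> Pow (closed_sets_on t)" by (rule SBf_Pow)
    show "F \<in> space M \<rightarrow> closed_sets_on t" using into by auto
    fix y assume "y \<in> SBf t"
    then show "F -` y \<inter> space M \<in> sets M"
      unfolding SBf_def
    proof (elim UnE CollectE exE conjE)
      fix K assume y: "y = {Z \<in> closed_sets_on t. Z \<inter> K = {}}" and K: "compact K"
      have "F -` y \<inter> space M = {x \<in> space M. F x \<inter> K = {}}" using y into by auto
      then show ?thesis using miss[of K] K compact_imp_closed by auto
    next
      fix G assume y: "y = {Z \<in> closed_sets_on t. Z \<inter> G \<noteq> {}}" and G: "openin (top_of_set {0..t}) G"
      obtain U where U: "open U" "G = U \<inter> {0..t}" using G by (auto simp: openin_open)
      have "F x \<inter> G = F x \<inter> U" if "x \<in> space M" for x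
        using into[OF that] closed_sets_on_sub[of "F x" t] U(2) by blast
      then have "F -` y \<inter> space M = {x \<in> space M. F x \<inter> U \<noteq> {}}"
        using y into by auto
      then show ?thesis using hit[OF U(1)] by auto
    qed
  qed
  ultimately show ?thesis by simp
qed

lemma minus_shift_eq: "(\<lambda>r. r - c) ` S = (+) (- c) ` (S :: real set)"
  by (auto simp: image_iff algebra_simps)

lemma closed_mshift: "closed S \<Longrightarrow> closed ((\<lambda>r. r - c) ` (S :: real set))"
  unfolding minus_shift_eq by (rule closed_translation)

lemma open_mshift: "open S \<Longrightarrow> open ((\<lambda>r. r - c) ` (S :: real set))"
  unfolding minus_shift_eq using open_translation[of S "-c"] by simp

lemma closed_pshift: "closed S \<Longrightarrow> closed ((+) c ` (S :: real set))"
  by (rule closed_translation)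

lemma open_pshift: "open S \<Longrightarrow> open ((+) c ` (S :: real set))"
  using open_translation[of S c] by simp

lemma mem_mshift: "(w::real) \<in> (\<lambda>r. r - c) ` X \<longleftrightarrow> c + w \<in> X"
proof
  assume "w \<in> (\<lambda>r. r - c) ` X" then obtain x where "x \<in> X" "w = x - c" by auto
  then show "c + w \<in> X" by simp
next
  assume "c + w \<in> X" then have "(c + w) - c \<in> (\<lambda>r. r - c) ` X" by (rule imageI)
  then show "w \<in> (\<lambda>r. r - c) ` X" by simp
qed

lemma mem_pshift: "(w::real) \<in> (+) c ` X \<longleftrightarrow> w - c \<in> X"
proof
  assume "w \<in> (+) c ` X" then obtain x where "x \<in> X" "w = c + x" by auto
  then show "w - c \<in> X" by simp
next
  assume "w - c \<in> X" then have "c + (w - c) \<in> (+) c ` X" by (rule imageI)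
  then show "w \<in> (+) c ` X" by simp
qed

lemma pshift_Int: "((+) c ` W) \<inter> X = {} \<longleftrightarrow> W \<inter> ((\<lambda>r. r - c) ` X) = {}" for W X :: "real set"
proof -
  have "((+) c ` W) \<inter> X = {} \<longleftrightarrow> (\<forall>w\<in>W. c + w \<notin> X)" by auto
  moreover have "W \<inter> ((\<lambda>r. r - c) ` X) = {} \<longleftrightarrow> (\<forall>w\<in>W. c + w \<notin> X)"
    using mem_mshift[of _ c X] by blast
  ultimately show ?thesis by simp
qed

lemma mshift_Int: "((\<lambda>r. r - c) ` W) \<inter> X = {} \<longleftrightarrow> W \<inter> ((+) c ` X) = {}" for W X :: "real set"
proof -
  have "((\<lambda>r. r - c) ` W) \<inter> X = {} \<longleftrightarrow> (\<forall>w\<in>W. w - c \<notin> X)" by auto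
  moreover have "W \<inter> ((+) c ` X) = {} \<longleftrightarrow> (\<forall>w\<in>W. w - c \<notin> X)"
    using mem_pshift[of _ c X] by blast
  ultimately show ?thesis by simp
qed

lemma in_closed_sets_on: "Z \<in> closed_sets_on t \<longleftrightarrow> Z \<subseteq> {0..t} \<and> closed Z"
  unfolding closed_sets_on_def by simp

lemma hit_split_upper:
  fixes Z U :: "real set" assumes Zs: "Z \<subseteq> {0..t}"
  shows "Z \<inter> {0..p} \<inter> U \<noteq> {} \<longleftrightarrow> Z \<inter> ({..<p} \<inter> U) \<noteq> {} \<or> Z \<inter> ({p} \<inter> U) \<noteq> {}"
proof
  assume "Z \<inter> {0..p} \<inter> U \<noteq> {}"
  then obtain x where x: "x \<in> Z" "0 \<le> x" "x \<le> p" "x \<in> U" by auto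
  show "Z \<inter> ({..<p} \<inter> U) \<noteq> {} \<or> Z \<inter> ({p} \<inter> U) \<noteq> {}"
  proof (cases "x = p")
    case True then show ?thesis using x by auto
  next
    case False then have "x < p" using x by auto
    then show ?thesis using x by (auto intro: less_imp_le)
  qed
next
  assume "Z \<inter> ({..<p} \<inter> U) \<noteq> {} \<or> Z \<inter> ({p} \<inter> U) \<noteq> {}"
  then obtain x where x: "x \<in> Z" "x \<le> p" "x \<in> U"
  proof
    assume "Z \<inter> ({..<p} \<inter> U) \<noteq> {}"
    then obtain x where "x \<in> Z" "x < p" "x \<in> U" by auto
    then show thesis using that[of x] by simp
  next
    assume "Z \<inter> ({p} \<inter> U) \<noteq> {}"
    then show thesis using that[of p] by auto
  qed
  then have "0 \<le> x" using Zs by auto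
  then show "Z \<inter> {0..p} \<inter> U \<noteq> {}" using x by auto
qed

lemma hit_split_lower:
  fixes Z U :: "real set" assumes Zs: "Z \<subseteq> {0..p+q}"
  shows "Z \<inter> {p..p+q} \<inter> U \<noteq> {} \<longleftrightarrow> Z \<inter> ({p<..} \<inter> U) \<noteq> {} \<or> Z \<inter> ({p} \<inter> U) \<noteq> {}"
proof
  assume "Z \<inter> {p..p+q} \<inter> U \<noteq> {}"
  then obtain x where x: "x \<in> Z" "p \<le> x" "x \<in> U" by auto
  show "Z \<inter> ({p<..} \<inter> U) \<noteq> {} \<or> Z \<inter> ({p} \<inter> U) \<noteq> {}"
  proof (cases "x = p")
    case True then show ?thesis using x by auto
  next
    case False then have "p < x" using x by auto
    then show ?thesis using x by (auto intro: less_imp_le)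
  qed
next
  assume "Z \<inter> ({p<..} \<inter> U) \<noteq> {} \<or> Z \<inter> ({p} \<inter> U) \<noteq> {}"
  then obtain x where x: "x \<in> Z" "p \<le> x" "x \<in> U"
  proof
    assume "Z \<inter> ({p<..} \<inter> U) \<noteq> {}"
    then obtain x where "x \<in> Z" "p < x" "x \<in> U" by auto
    then show thesis using that[of x] by simp
  next
    assume "Z \<inter> ({p} \<inter> U) \<noteq> {}"
    then show thesis using that[of p] by auto
  qed
  then have "x \<le> p + q" using Zs by auto
  then show "Z \<inter> {p..p+q} \<inter> U \<noteq> {}" using x by auto
qed

lemma oplus_Int_empty:
  "oplus p (A, B) \<inter> C = {} \<longleftrightarrow> A \<inter> C = {} \<and> B \<inter> (\<lambda>r. r - p) ` C = {}"
  unfolding oplus_def using pshift_Int[of p B C] by (simp add: Int_Un_distrib2)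

lemma closed_singleton_Int: "closed ({p} \<inter> (U :: real set))"
  by (cases "p \<in> U") auto

lemma hit_Un_sets:
  "{Z \<in> closed_sets_on t. Z \<inter> A \<noteq> {} \<or> Z \<inter> B \<noteq> {}}
    = {Z \<in> closed_sets_on t. Z \<inter> A \<noteq> {}} \<union> {Z \<in> closed_sets_on t. Z \<inter> B \<noteq> {}}"
  by auto

lemma measurable_phi1:
  assumes "0 \<le> p" "0 \<le> q"
  shows "(\<lambda>Z. Z \<inter> {0..p}) \<in> measurable (Cmeas (p+q)) (Cmeas p)"
proof (rule measurable_into_Cmeas)
  fix Z assume "Z \<in> space (Cmeas (p+q))"
  then show "Z \<inter> {0..p} \<in> closed_sets_on p" by (auto simp: in_closed_sets_on)
next
  fix C :: "real set" assume C: "closed C"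
  have "{Z \<in> space (Cmeas (p+q)). Z \<inter> {0..p} \<inter> C = {}} = {Z \<in> closed_sets_on (p+q). Z \<inter> ({0..p} \<inter> C) = {}}"
    by (auto simp: Int_assoc)
  then show "{Z \<in> space (Cmeas (p+q)). Z \<inter> {0..p} \<inter> C = {}} \<in> sets (Cmeas (p+q))"
    using miss_closed[of "{0..p} \<inter> C" "p+q"] C by auto
next
  fix U :: "real set" assume U: "open U"
  have "{Z \<in> space (Cmeas (p+q)). Z \<inter> {0..p} \<inter> U \<noteq> {}}
      = {Z \<in> closed_sets_on (p+q). Z \<inter> ({..<p} \<inter> U) \<noteq> {}} \<union> {Z \<in> closed_sets_on (p+q). Z \<inter> ({p} \<inter> U) \<noteq> {}}"
    using hit_split_upper[of _ "p+q" p U] closed_sets_on_sub[of _ "p+q"] by auto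
  moreover have "{Z \<in> closed_sets_on (p+q). Z \<inter> ({..<p} \<inter> U) \<noteq> {}} \<in> sets (Cmeas (p+q))"
    using U by (intro hit_open) auto
  moreover have "{Z \<in> closed_sets_on (p+q). Z \<inter> ({p} \<inter> U) \<noteq> {}} \<in> sets (Cmeas (p+q))"
    by (intro hit_closed closed_singleton_Int)
  ultimately show "{Z \<in> space (Cmeas (p+q)). Z \<inter> {0..p} \<inter> U \<noteq> {}} \<in> sets (Cmeas (p+q))" by simp
qed

lemma measurable_phi2:
  assumes "0 \<le> p" "0 \<le> q"
  shows "(\<lambda>Z. (\<lambda>r. r - p) ` (Z \<inter> {p..p+q})) \<in> measurable (Cmeas (p+q)) (Cmeas q)"
proof (rule measurable_into_Cmeas)
  fix Z assume "Z \<in> space (Cmeas (p+q))"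
  then have "closed (Z \<inter> {p..p+q})" by (auto simp: in_closed_sets_on)
  then show "(\<lambda>r. r - p) ` (Z \<inter> {p..p+q}) \<in> closed_sets_on q"
    by (auto simp: in_closed_sets_on intro!: closed_mshift)
next
  fix C :: "real set" assume C: "closed C"
  have "{Z \<in> space (Cmeas (p+q)). (\<lambda>r. r - p) ` (Z \<inter> {p..p+q}) \<inter> C = {}}
      = {Z \<in> closed_sets_on (p+q). Z \<inter> ({p..p+q} \<inter> (+) p ` C) = {}}"
    by (simp add: mshift_Int Int_assoc)
  then show "{Z \<in> space (Cmeas (p+q)). (\<lambda>r. r - p) ` (Z \<inter> {p..p+q}) \<inter> C = {}} \<in> sets (Cmeas (p+q))"
    using miss_closed[of "{p..p+q} \<inter> (+) p ` C" "p+q"] closed_pshift[OF C, of p] by auto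
next
  fix U :: "real set" assume U: "open U"
  have e1: "(\<lambda>r. r - p) ` (Z \<inter> {p..p+q}) \<inter> U \<noteq> {} \<longleftrightarrow> Z \<inter> {p..p+q} \<inter> (+) p ` U \<noteq> {}" for Z
    using mshift_Int[of p "Z \<inter> {p..p+q}" U] by simp
  have "{Z \<in> space (Cmeas (p+q)). (\<lambda>r. r - p) ` (Z \<inter> {p..p+q}) \<inter> U \<noteq> {}}
      = {Z \<in> closed_sets_on (p+q). Z \<inter> ({p<..} \<inter> (+) p ` U) \<noteq> {}}
        \<union> {Z \<in> closed_sets_on (p+q). Z \<inter> ({p} \<inter> (+) p ` U) \<noteq> {}}"
  proof -
    have key: "((\<lambda>r. r - p) ` (Z \<inter> {p..p+q}) \<inter> U \<noteq> {})
       = (Z \<inter> ({p<..} \<inter> (+) p ` U) \<noteq> {} \<or> Z \<inter> ({p} \<inter> (+) p ` U) \<noteq> {})"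
      if "Z \<in> closed_sets_on (p+q)" for Z
      using e1[of Z] hit_split_lower[of Z p q "(+) p ` U"] closed_sets_on_sub[OF that] by simp
    show ?thesis
    proof (rule set_eqI)
      fix Z
      show "Z \<in> {Z \<in> space (Cmeas (p+q)). (\<lambda>r. r - p) ` (Z \<inter> {p..p+q}) \<inter> U \<noteq> {}} \<longleftrightarrow>
        Z \<in> {Z \<in> closed_sets_on (p+q). Z \<inter> ({p<..} \<inter> (+) p ` U) \<noteq> {}}
        \<union> {Z \<in> closed_sets_on (p+q). Z \<inter> ({p} \<inter> (+) p ` U) \<noteq> {}}"
      proof (cases "Z \<in> closed_sets_on (p+q)")
        case True
        then show ?thesis using key[OF True] by (simp only: space_Cmeas mem_Collect_eq Un_iff simp_thms)
      qed simp
    qed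
  qed
  moreover have "{Z \<in> closed_sets_on (p+q). Z \<inter> ({p<..} \<inter> (+) p ` U) \<noteq> {}} \<in> sets (Cmeas (p+q))"
    using U open_pshift by (intro hit_open) auto
  moreover have "{Z \<in> closed_sets_on (p+q). Z \<inter> ({p} \<inter> (+) p ` U) \<noteq> {}} \<in> sets (Cmeas (p+q))"
    by (intro hit_closed closed_singleton_Int)
  ultimately show "{Z \<in> space (Cmeas (p+q)). (\<lambda>r. r - p) ` (Z \<inter> {p..p+q}) \<inter> U \<noteq> {}} \<in> sets (Cmeas (p+q))"
    by simp
qed

lemma measurable_psi1:
  assumes "0 \<le> p" "0 \<le> q"
  shows "(\<lambda>W. W) \<in> measurable (Cmeas p) (Cmeas (p+q))"
proof (rule measurable_into_Cmeas)
  fix W assume "W \<in> space (Cmeas p)"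
  then show "W \<in> closed_sets_on (p+q)" using assms by (auto simp: in_closed_sets_on)
next
  fix C :: "real set" assume C: "closed C"
  show "{W \<in> space (Cmeas p). W \<inter> C = {}} \<in> sets (Cmeas p)" using miss_closed[OF C] by simp
next
  fix U :: "real set" assume U: "open U"
  show "{W \<in> space (Cmeas p). W \<inter> U \<noteq> {}} \<in> sets (Cmeas p)" using hit_open[OF U] by simp
qed

lemma measurable_psi2:
  assumes "0 \<le> p" "0 \<le> q"
  shows "(\<lambda>W. (+) p ` W) \<in> measurable (Cmeas q) (Cmeas (p+q))"
proof (rule measurable_into_Cmeas)
  fix W assume "W \<in> space (Cmeas q)"
  then show "(+) p ` W \<in> closed_sets_on (p+q)" using assms
    by (auto simp: in_closed_sets_on intro!: closed_pshift)
next
  fix C :: "real set" assume C: "closed C"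
  have "{W \<in> space (Cmeas q). (+) p ` W \<inter> C = {}} = {W \<in> closed_sets_on q. W \<inter> (\<lambda>r. r - p) ` C = {}}"
    by (simp add: pshift_Int)
  then show "{W \<in> space (Cmeas q). (+) p ` W \<inter> C = {}} \<in> sets (Cmeas q)"
    using miss_closed[OF closed_mshift[OF C]] by simp
next
  fix U :: "real set" assume U: "open U"
  have "{W \<in> space (Cmeas q). (+) p ` W \<inter> U \<noteq> {}} = {W \<in> closed_sets_on q. W \<inter> (\<lambda>r. r - p) ` U \<noteq> {}}"
    by (simp add: pshift_Int)
  then show "{W \<in> space (Cmeas q). (+) p ` W \<inter> U \<noteq> {}} \<in> sets (Cmeas q)"
    using hit_open[OF open_mshift[OF U]] by simp
qed

lemma measurable_oplus:
  assumes "0 \<le> p" "0 \<le> q"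
  shows "oplus p \<in> measurable (Cmeas p \<Otimes>\<^sub>M Cmeas q) (Cmeas (p+q))"
proof (rule measurable_into_Cmeas)
  fix x assume "x \<in> space (Cmeas p \<Otimes>\<^sub>M Cmeas q)"
  then have "fst x \<in> closed_sets_on p" "snd x \<in> closed_sets_on q" by (auto simp: space_pair_measure)
  then show "oplus p x \<in> closed_sets_on (p+q)" using assms
    by (auto simp: in_closed_sets_on oplus_def intro!: closed_pshift)
next
  fix C :: "real set" assume C: "closed C"
  have "{x \<in> space (Cmeas p \<Otimes>\<^sub>M Cmeas q). oplus p x \<inter> C = {}}
     = {W \<in> closed_sets_on p. W \<inter> C = {}} \<times> {W \<in> closed_sets_on q. W \<inter> (\<lambda>r. r - p) ` C = {}}"
  proof (rule set_eqI)
    fix x :: "real set \<times> real set"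
    obtain a b where x: "x = (a, b)" by (cases x)
    show "x \<in> {x \<in> space (Cmeas p \<Otimes>\<^sub>M Cmeas q). oplus p x \<inter> C = {}} \<longleftrightarrow>
      x \<in> {W \<in> closed_sets_on p. W \<inter> C = {}} \<times> {W \<in> closed_sets_on q. W \<inter> (\<lambda>r. r - p) ` C = {}}"
      unfolding x using oplus_Int_empty[of p a b C] by (auto simp: space_pair_measure)
  qed
  then show "{x \<in> space (Cmeas p \<Otimes>\<^sub>M Cmeas q). oplus p x \<inter> C = {}} \<in> sets (Cmeas p \<Otimes>\<^sub>M Cmeas q)"
    using miss_closed[OF C] miss_closed[OF closed_mshift[OF C]] by auto
next
  fix U :: "real set" assume U: "open U"
  have "{x \<in> space (Cmeas p \<Otimes>\<^sub>M Cmeas q). oplus p x \<inter> U \<noteq> {}}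
     = {W \<in> closed_sets_on p. W \<inter> U \<noteq> {}} \<times> closed_sets_on q
       \<union> closed_sets_on p \<times> {W \<in> closed_sets_on q. W \<inter> (\<lambda>r. r - p) ` U \<noteq> {}}"
  proof (rule set_eqI)
    fix x :: "real set \<times> real set"
    obtain a b where x: "x = (a, b)" by (cases x)
    show "x \<in> {x \<in> space (Cmeas p \<Otimes>\<^sub>M Cmeas q). oplus p x \<inter> U \<noteq> {}} \<longleftrightarrow>
      x \<in> {W \<in> closed_sets_on p. W \<inter> U \<noteq> {}} \<times> closed_sets_on q
       \<union> closed_sets_on p \<times> {W \<in> closed_sets_on q. W \<inter> (\<lambda>r. r - p) ` U \<noteq> {}}"
      unfolding x using oplus_Int_empty[of p a b U] by (auto simp: space_pair_measure)
  qed
  moreover have "{W \<in> closed_sets_on p. W \<inter> U \<noteq> {}} \<times> closed_sets_on q \<in> sets (Cmeas p \<Otimes>\<^sub>M Cmeas q)"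
    using hit_open[OF U] by (intro pair_measureI) (auto simp flip: space_Cmeas)
  moreover have "closed_sets_on p \<times> {W \<in> closed_sets_on q. W \<inter> (\<lambda>r. r - p) ` U \<noteq> {}} \<in> sets (Cmeas p \<Otimes>\<^sub>M Cmeas q)"
    using hit_open[OF open_mshift[OF U]] by (intro pair_measureI) (auto simp flip: space_Cmeas)
  ultimately show "{x \<in> space (Cmeas p \<Otimes>\<^sub>M Cmeas q). oplus p x \<inter> U \<noteq> {}} \<in> sets (Cmeas p \<Otimes>\<^sub>M Cmeas q)"
    by simp
qed

lemma fam_basic:
  assumes "meas_fact_family \<nu>" "t > 0"
  shows "prob_space (\<nu> t)" "sets (\<nu> t) = sets (Cmeas t)" "space (\<nu> t) = closed_sets_on t"
  using assms unfolding meas_fact_family_def by auto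

lemma fam_point_null:
  assumes "meas_fact_family \<nu>" "t > 0" "r \<in> {0..t}"
  shows "{Z \<in> closed_sets_on t. Z \<inter> {r} \<noteq> {}} \<in> null_sets (\<nu> t)"
proof -
  have "emeasure (\<nu> t) {Z \<in> space (\<nu> t). r \<in> Z} = 0" using assms unfolding meas_fact_family_def by auto
  moreover have "{Z \<in> space (\<nu> t). r \<in> Z} = {Z \<in> closed_sets_on t. Z \<inter> {r} \<noteq> {}}"
    using fam_basic[OF assms(1,2)] by auto
  moreover have "{Z \<in> closed_sets_on t. Z \<inter> {r} \<noteq> {}} \<in> sets (\<nu> t)"
    using fam_basic[OF assms(1,2)] hit_closed[of "{r}" t] by simp
  ultimately show ?thesis by auto
qed

lemma cond_measure_emeasure:
  assumes A: "A \<in> sets M" and X: "X \<in> sets M"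
  shows "emeasure (cond_measure M A) X = emeasure M (X \<inter> A) / emeasure M A"
proof -
  have "emeasure (cond_measure M A) X = (\<integral>\<^sup>+x. indicator A x / emeasure M A * indicator X x \<partial>M)"
    unfolding cond_measure_def using A X by (subst emeasure_density) auto
  also have "\<dots> = (\<integral>\<^sup>+x. indicator (X \<inter> A) x / emeasure M A \<partial>M)"
    by (rule nn_integral_cong) (auto simp: indicator_def)
  also have "\<dots> = (\<integral>\<^sup>+x. indicator (X \<inter> A) x \<partial>M) / emeasure M A"
    using A X by (intro nn_integral_divide) auto
  also have "\<dots> = emeasure M (X \<inter> A) / emeasure M A" using A X by simp
  finally show ?thesis .
qed

lemma sets_cond_measure [simp]: "sets (cond_measure M A) = sets M"
  and space_cond_measure [simp]: "space (cond_measure M A) = space M"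
  unfolding cond_measure_def by simp_all

locale fpq =
  fixes \<nu> :: "real \<Rightarrow> real set measure" and p q :: real
  assumes fam: "meas_fact_family \<nu>" and p: "p > 0" and q: "q > 0"
begin

definition "Sg = distr (\<nu> p \<Otimes>\<^sub>M \<nu> q) (Cmeas (p+q)) (oplus p)"
definition "E10s = {Z \<in> closed_sets_on (p+q). Z \<inter> {0..p} \<noteq> {} \<and> Z \<inter> {p..p+q} = {}}"
definition "E01s = {Z \<in> closed_sets_on (p+q). Z \<inter> {0..p} = {} \<and> Z \<inter> {p..p+q} \<noteq> {}}"
definition "E11s = {Z \<in> closed_sets_on (p+q). Z \<inter> {0..p} \<noteq> {} \<and> Z \<inter> {p..p+q} \<noteq> {}}"
definition "phi1 = (\<lambda>Z. Z \<inter> {0..p})"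
definition "phi2 = (\<lambda>Z. (\<lambda>r. r - p) ` (Z \<inter> {p..p+q}))"

lemma pq_basic:
  "prob_space (\<nu> p)" "sets (\<nu> p) = sets (Cmeas p)" "space (\<nu> p) = closed_sets_on p"
  "prob_space (\<nu> q)" "sets (\<nu> q) = sets (Cmeas q)" "space (\<nu> q) = closed_sets_on q"
  "prob_space (\<nu> (p+q))" "sets (\<nu> (p+q)) = sets (Cmeas (p+q))" "space (\<nu> (p+q)) = closed_sets_on (p+q)"
  using fam_basic[OF fam] p q by auto

lemma oplus_meas: "oplus p \<in> measurable (\<nu> p \<Otimes>\<^sub>M \<nu> q) (Cmeas (p+q))"
proof -
  have "measurable (\<nu> p \<Otimes>\<^sub>M \<nu> q) (Cmeas (p+q)) = measurable (Cmeas p \<Otimes>\<^sub>M Cmeas q) (Cmeas (p+q))"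
    by (rule measurable_cong_sets) (simp_all only: sets_pair_measure_cong[OF pq_basic(2) pq_basic(5)])
  then show ?thesis using measurable_oplus[of p q] p q by simp
qed

lemma Sg_prob: "prob_space Sg"
proof -
  interpret P: prob_space "\<nu> p" by (rule pq_basic)
  interpret Q: prob_space "\<nu> q" by (rule pq_basic)
  interpret PQ: pair_prob_space "\<nu> p" "\<nu> q" ..
  show ?thesis unfolding Sg_def by (rule PQ.prob_space_distr[OF oplus_meas])
qed

lemma sets_Sg [simp]: "sets Sg = sets (Cmeas (p+q))" and space_Sg [simp]: "space Sg = closed_sets_on (p+q)"
  unfolding Sg_def by simp_all

lemma emeasure_Sg:
  assumes "A \<in> sets (Cmeas (p+q))"
  shows "emeasure Sg A = emeasure (\<nu> p \<Otimes>\<^sub>M \<nu> q) (oplus p -` A \<inter> (closed_sets_on p \<times> closed_sets_on q))"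
  unfolding Sg_def using emeasure_distr[OF oplus_meas assms] by (simp add: space_pair_measure pq_basic)

lemma emeasure_pq_Times:
  assumes "A \<in> sets (Cmeas p)" "B \<in> sets (Cmeas q)"
  shows "emeasure (\<nu> p \<Otimes>\<^sub>M \<nu> q) (A \<times> B) = emeasure (\<nu> p) A * emeasure (\<nu> q) B"
proof -
  interpret Q: prob_space "\<nu> q" by (rule pq_basic)
  show ?thesis using assms by (intro Q.emeasure_pair_measure_Times) (simp_all add: pq_basic)
qed

lemma empty_in: "{} \<in> closed_sets_on t"
  by (simp add: in_closed_sets_on)

lemma sing_empty_sets: "{{}} \<in> sets (Cmeas t)"
proof -
  have "{{}} = {Z \<in> closed_sets_on t. Z \<inter> UNIV = {}}" using empty_in by auto
  then show ?thesis using miss_closed[of UNIV t] by simp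
qed

lemma nonempty_sets: "{Z \<in> closed_sets_on t. Z \<noteq> {}} \<in> sets (Cmeas t)"
proof -
  have "{Z \<in> closed_sets_on t. Z \<noteq> {}} = {Z \<in> closed_sets_on t. Z \<inter> UNIV \<noteq> {}}" by auto
  then show ?thesis using hit_open[of UNIV t] by simp
qed

lemma E_sets: "E10s \<in> sets (Cmeas (p+q))" "E01s \<in> sets (Cmeas (p+q))" "E11s \<in> sets (Cmeas (p+q))"
proof -
  have h1: "{Z \<in> closed_sets_on (p+q). Z \<inter> {0..p} \<noteq> {}} \<in> sets (Cmeas (p+q))" by (rule hit_closed) auto
  have h2: "{Z \<in> closed_sets_on (p+q). Z \<inter> {p..p+q} \<noteq> {}} \<in> sets (Cmeas (p+q))" by (rule hit_closed) auto
  have m1: "{Z \<in> closed_sets_on (p+q). Z \<inter> {0..p} = {}} \<in> sets (Cmeas (p+q))" by (rule miss_closed) auto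
  have m2: "{Z \<in> closed_sets_on (p+q). Z \<inter> {p..p+q} = {}} \<in> sets (Cmeas (p+q))" by (rule miss_closed) auto
  have "E10s = {Z \<in> closed_sets_on (p+q). Z \<inter> {0..p} \<noteq> {}} \<inter> {Z \<in> closed_sets_on (p+q). Z \<inter> {p..p+q} = {}}"
    unfolding E10s_def by auto
  then show "E10s \<in> sets (Cmeas (p+q))" using h1 m2 by auto
  have "E01s = {Z \<in> closed_sets_on (p+q). Z \<inter> {0..p} = {}} \<inter> {Z \<in> closed_sets_on (p+q). Z \<inter> {p..p+q} \<noteq> {}}"
    unfolding E01s_def by auto
  then show "E01s \<in> sets (Cmeas (p+q))" using h2 m1 by auto
  have "E11s = {Z \<in> closed_sets_on (p+q). Z \<inter> {0..p} \<noteq> {}} \<inter> {Z \<in> closed_sets_on (p+q). Z \<inter> {p..p+q} \<noteq> {}}"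
    unfolding E11s_def by auto
  then show "E11s \<in> sets (Cmeas (p+q))" using h1 h2 by auto
qed

lemma partition:
  "closed_sets_on (p+q) = {{}} \<union> E10s \<union> E01s \<union> E11s"
  "{{}} \<inter> E10s = {}" "{{}} \<inter> E01s = {}" "{{}} \<inter> E11s = {}"
  "E10s \<inter> E01s = {}" "E10s \<inter> E11s = {}" "E01s \<inter> E11s = {}"
proof -
  show "closed_sets_on (p+q) = {{}} \<union> E10s \<union> E01s \<union> E11s"
  proof
    show "closed_sets_on (p+q) \<subseteq> {{}} \<union> E10s \<union> E01s \<union> E11s"
    proof
      fix Z assume Z: "Z \<in> closed_sets_on (p+q)"
      show "Z \<in> {{}} \<union> E10s \<union> E01s \<union> E11s"
      proof (cases "Z = {}")
        case False
        then obtain z where z: "z \<in> Z" by auto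
        then have "z \<in> {0..p} \<or> z \<in> {p..p+q}" using Z closed_sets_on_sub[OF Z] by auto
        then show ?thesis using Z z unfolding E10s_def E01s_def E11s_def by auto
      qed simp
    qed
    show "{{}} \<union> E10s \<union> E01s \<union> E11s \<subseteq> closed_sets_on (p+q)"
      using empty_in unfolding E10s_def E01s_def E11s_def by auto
  qed
qed (auto simp: E10s_def E01s_def E11s_def)

lemma oplus_in_E10:
  assumes "Z1 \<in> closed_sets_on p" "Z2 \<in> closed_sets_on q"
  shows "oplus p (Z1, Z2) \<in> E10s \<longleftrightarrow> Z1 \<noteq> {} \<and> Z1 \<inter> {p} = {} \<and> Z2 = {}"
proof -
  have s1: "Z1 \<subseteq> {0..p}" and s2: "Z2 \<subseteq> {0..q}" using assms closed_sets_on_sub by auto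
  have in1: "oplus p (Z1, Z2) \<in> closed_sets_on (p+q)"
    using assms p q by (auto simp: in_closed_sets_on oplus_def intro!: closed_pshift)
  have "oplus p (Z1, Z2) \<inter> {p..p+q} = {} \<longleftrightarrow> Z1 \<inter> {p} = {} \<and> Z2 = {}"
  proof
    assume H: "oplus p (Z1, Z2) \<inter> {p..p+q} = {}"
    have "Z2 = {}"
    proof (rule ccontr)
      assume "Z2 \<noteq> {}" then obtain z where "z \<in> Z2" by auto
      then have "p + z \<in> oplus p (Z1, Z2)" "p + z \<in> {p..p+q}" using s2 by (auto simp: oplus_def)
      then show False using H by auto
    qed
    moreover have "Z1 \<inter> {p} = {}" using H q by (auto simp: oplus_def)
    ultimately show "Z1 \<inter> {p} = {} \<and> Z2 = {}" by simp
  next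
    assume "Z1 \<inter> {p} = {} \<and> Z2 = {}"
    then show "oplus p (Z1, Z2) \<inter> {p..p+q} = {}" using s1 by (fastforce simp: oplus_def)
  qed
  moreover have "Z2 = {} \<Longrightarrow> oplus p (Z1, Z2) \<inter> {0..p} \<noteq> {} \<longleftrightarrow> Z1 \<noteq> {}"
    using s1 by (auto simp: oplus_def)
  ultimately show ?thesis using in1 unfolding E10s_def by auto
qed

lemma oplus_in_E01:
  assumes "Z1 \<in> closed_sets_on p" "Z2 \<in> closed_sets_on q"
  shows "oplus p (Z1, Z2) \<in> E01s \<longleftrightarrow> Z1 = {} \<and> Z2 \<noteq> {} \<and> Z2 \<inter> {0} = {}"
proof -
  have s1: "Z1 \<subseteq> {0..p}" and s2: "Z2 \<subseteq> {0..q}" using assms closed_sets_on_sub by auto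
  have in1: "oplus p (Z1, Z2) \<in> closed_sets_on (p+q)"
    using assms p q by (auto simp: in_closed_sets_on oplus_def intro!: closed_pshift)
  have "oplus p (Z1, Z2) \<inter> {0..p} = {} \<longleftrightarrow> Z1 = {} \<and> Z2 \<inter> {0} = {}"
  proof
    assume H: "oplus p (Z1, Z2) \<inter> {0..p} = {}"
    have "Z1 = {}" using H s1 by (auto simp: oplus_def)
    moreover have "0 \<notin> Z2"
    proof
      assume "0 \<in> Z2" then have "p + 0 \<in> oplus p (Z1, Z2)" by (auto simp: oplus_def)
      then show False using H p by auto
    qed
    ultimately show "Z1 = {} \<and> Z2 \<inter> {0} = {}" by auto
  next
    assume H: "Z1 = {} \<and> Z2 \<inter> {0} = {}"
    show "oplus p (Z1, Z2) \<inter> {0..p} = {}"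
    proof (rule ccontr)
      assume "oplus p (Z1, Z2) \<inter> {0..p} \<noteq> {}"
      then obtain z where "z \<in> Z2" "p + z \<le> p" using H by (auto simp: oplus_def)
      moreover then have "0 \<le> z" using s2 by auto
      ultimately have "z = 0" by simp
      then show False using H \<open>z \<in> Z2\<close> by auto
    qed
  qed
  moreover have "Z1 = {} \<Longrightarrow> oplus p (Z1, Z2) \<inter> {p..p+q} \<noteq> {} \<longleftrightarrow> Z2 \<noteq> {}"
  proof -
    assume "Z1 = {}"
    then have "oplus p (Z1, Z2) = (+) p ` Z2" by (simp add: oplus_def)
    moreover have "(+) p ` Z2 \<subseteq> {p..p+q}" using s2 by auto
    ultimately show "oplus p (Z1, Z2) \<inter> {p..p+q} \<noteq> {} \<longleftrightarrow> Z2 \<noteq> {}" by auto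
  qed
  ultimately show ?thesis using in1 unfolding E01s_def by auto
qed

end

context fpq begin

lemma pre_E10:
  assumes B: "B \<subseteq> closed_sets_on p"
  shows "oplus p -` ((phi1 -` B \<inter> closed_sets_on (p+q)) \<inter> E10s) \<inter> (closed_sets_on p \<times> closed_sets_on q)
       = (B \<inter> {Z \<in> closed_sets_on p. Z \<noteq> {}} \<inter> {Z \<in> closed_sets_on p. Z \<inter> {p} = {}}) \<times> {{}}"
proof (rule set_eqI)
  fix x :: "real set \<times> real set"
  obtain Z1 Z2 where x: "x = (Z1, Z2)" by (cases x)
  show "x \<in> oplus p -` ((phi1 -` B \<inter> closed_sets_on (p+q)) \<inter> E10s) \<inter> (closed_sets_on p \<times> closed_sets_on q)
     \<longleftrightarrow> x \<in> (B \<inter> {Z \<in> closed_sets_on p. Z \<noteq> {}} \<inter> {Z \<in> closed_sets_on p. Z \<inter> {p} = {}}) \<times> {{}}"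
  proof (cases "Z1 \<in> closed_sets_on p \<and> Z2 \<in> closed_sets_on q")
    case True
    then have s1: "Z1 \<subseteq> {0..p}" using closed_sets_on_sub by auto
    have e: "Z2 = {} \<Longrightarrow> oplus p (Z1, Z2) = Z1" by (simp add: oplus_def)
    have ph: "phi1 Z1 = Z1" using s1 by (auto simp: phi1_def)
    have "oplus p (Z1, Z2) \<in> closed_sets_on (p+q)"
      using True p q by (auto simp: in_closed_sets_on oplus_def intro!: closed_pshift)
    then show ?thesis using True oplus_in_E10[of Z1 Z2] e ph unfolding x by auto
  next
    case False
    then show ?thesis unfolding x using empty_in B by auto
  qed
qed

lemma pre_E01:
  assumes B: "B \<subseteq> closed_sets_on q"
  shows "oplus p -` ((phi2 -` B \<inter> closed_sets_on (p+q)) \<inter> E01s) \<inter> (closed_sets_on p \<times> closed_sets_on q)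
       = {{}} \<times> (B \<inter> {Z \<in> closed_sets_on q. Z \<noteq> {}} \<inter> {Z \<in> closed_sets_on q. Z \<inter> {0} = {}})"
proof (rule set_eqI)
  fix x :: "real set \<times> real set"
  obtain Z1 Z2 where x: "x = (Z1, Z2)" by (cases x)
  show "x \<in> oplus p -` ((phi2 -` B \<inter> closed_sets_on (p+q)) \<inter> E01s) \<inter> (closed_sets_on p \<times> closed_sets_on q)
     \<longleftrightarrow> x \<in> {{}} \<times> (B \<inter> {Z \<in> closed_sets_on q. Z \<noteq> {}} \<inter> {Z \<in> closed_sets_on q. Z \<inter> {0} = {}})"
  proof (cases "Z1 \<in> closed_sets_on p \<and> Z2 \<in> closed_sets_on q")
    case True
    then have s2: "Z2 \<subseteq> {0..q}" using closed_sets_on_sub by auto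
    have e: "Z1 = {} \<Longrightarrow> oplus p (Z1, Z2) = (+) p ` Z2" by (simp add: oplus_def)
    have "(+) p ` Z2 \<inter> {p..p+q} = (+) p ` Z2" using s2 by auto
    then have ph: "phi2 ((+) p ` Z2) = Z2" by (simp add: phi2_def image_image)
    have "oplus p (Z1, Z2) \<in> closed_sets_on (p+q)"
      using True p q by (auto simp: in_closed_sets_on oplus_def intro!: closed_pshift)
    then show ?thesis using True oplus_in_E01[of Z1 Z2] e ph unfolding x by auto
  next
    case False
    then show ?thesis unfolding x using empty_in B by auto
  qed
qed

lemma pre_empty:
  "oplus p -` {{}} \<inter> (closed_sets_on p \<times> closed_sets_on q) = {{}} \<times> {{}}"
  using empty_in by (auto simp: oplus_def)

lemma phi1_meas: "phi1 \<in> measurable (Cmeas (p+q)) (Cmeas p)"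
  unfolding phi1_def using measurable_phi1[of p q] p q by simp

lemma phi2_meas: "phi2 \<in> measurable (Cmeas (p+q)) (Cmeas q)"
  unfolding phi2_def using measurable_phi2[of p q] p q by simp

lemma null_drop:
  assumes "t > 0" "r \<in> {0..t}" "X \<in> sets (Cmeas t)"
  shows "emeasure (\<nu> t) (X \<inter> {Z \<in> closed_sets_on t. Z \<inter> {r} = {}}) = emeasure (\<nu> t) X"
proof -
  have "X \<inter> {Z \<in> closed_sets_on t. Z \<inter> {r} = {}} = X - {Z \<in> closed_sets_on t. Z \<inter> {r} \<noteq> {}}"
    using sets.sets_into_space[OF assms(3)] by auto
  then show ?thesis
    using emeasure_Diff_null_set[OF fam_point_null[OF fam assms(1,2)], of X] assms(3) fam_basic[OF fam assms(1)]
    by simp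
qed

lemma Sg_E10_pre:
  assumes B: "B \<in> sets (Cmeas p)"
  shows "emeasure Sg ((phi1 -` B \<inter> closed_sets_on (p+q)) \<inter> E10s)
       = emeasure (\<nu> p) (B \<inter> {Z \<in> closed_sets_on p. Z \<noteq> {}}) * emeasure (\<nu> q) {{}}"
proof -
  have Bs: "B \<subseteq> closed_sets_on p" using sets.sets_into_space[OF B] by simp
  have m: "(phi1 -` B \<inter> closed_sets_on (p+q)) \<inter> E10s \<in> sets (Cmeas (p+q))"
    using measurable_sets[OF phi1_meas B] E_sets by auto
  have X: "B \<inter> {Z \<in> closed_sets_on p. Z \<noteq> {}} \<in> sets (Cmeas p)" using B nonempty_sets by auto
  have "emeasure Sg ((phi1 -` B \<inter> closed_sets_on (p+q)) \<inter> E10s)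
      = emeasure (\<nu> p \<Otimes>\<^sub>M \<nu> q) ((B \<inter> {Z \<in> closed_sets_on p. Z \<noteq> {}} \<inter> {Z \<in> closed_sets_on p. Z \<inter> {p} = {}}) \<times> {{}})"
    using emeasure_Sg[OF m] pre_E10[OF Bs] by simp
  also have "\<dots> = emeasure (\<nu> p) (B \<inter> {Z \<in> closed_sets_on p. Z \<noteq> {}} \<inter> {Z \<in> closed_sets_on p. Z \<inter> {p} = {}}) * emeasure (\<nu> q) {{}}"
    using X miss_closed[of "{p}" p] sing_empty_sets by (intro emeasure_pq_Times) auto
  also have "emeasure (\<nu> p) (B \<inter> {Z \<in> closed_sets_on p. Z \<noteq> {}} \<inter> {Z \<in> closed_sets_on p. Z \<inter> {p} = {}})
      = emeasure (\<nu> p) (B \<inter> {Z \<in> closed_sets_on p. Z \<noteq> {}})"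
    using null_drop[OF p _ X, of p] p by simp
  finally show ?thesis .
qed

lemma Sg_E01_pre:
  assumes B: "B \<in> sets (Cmeas q)"
  shows "emeasure Sg ((phi2 -` B \<inter> closed_sets_on (p+q)) \<inter> E01s)
       = emeasure (\<nu> p) {{}} * emeasure (\<nu> q) (B \<inter> {Z \<in> closed_sets_on q. Z \<noteq> {}})"
proof -
  have Bs: "B \<subseteq> closed_sets_on q" using sets.sets_into_space[OF B] by simp
  have m: "(phi2 -` B \<inter> closed_sets_on (p+q)) \<inter> E01s \<in> sets (Cmeas (p+q))"
    using measurable_sets[OF phi2_meas B] E_sets by auto
  have X: "B \<inter> {Z \<in> closed_sets_on q. Z \<noteq> {}} \<in> sets (Cmeas q)" using B nonempty_sets by auto
  have "emeasure Sg ((phi2 -` B \<inter> closed_sets_on (p+q)) \<inter> E01s)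
      = emeasure (\<nu> p \<Otimes>\<^sub>M \<nu> q) ({{}} \<times> (B \<inter> {Z \<in> closed_sets_on q. Z \<noteq> {}} \<inter> {Z \<in> closed_sets_on q. Z \<inter> {0} = {}}))"
    using emeasure_Sg[OF m] pre_E01[OF Bs] by simp
  also have "\<dots> = emeasure (\<nu> p) {{}} * emeasure (\<nu> q) (B \<inter> {Z \<in> closed_sets_on q. Z \<noteq> {}} \<inter> {Z \<in> closed_sets_on q. Z \<inter> {0} = {}})"
    using X miss_closed[of "{0}" q] sing_empty_sets by (intro emeasure_pq_Times) auto
  also have "emeasure (\<nu> q) (B \<inter> {Z \<in> closed_sets_on q. Z \<noteq> {}} \<inter> {Z \<in> closed_sets_on q. Z \<inter> {0} = {}})
      = emeasure (\<nu> q) (B \<inter> {Z \<in> closed_sets_on q. Z \<noteq> {}})"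
    using null_drop[OF q _ X, of 0] q by simp
  finally show ?thesis .
qed

lemma Sg_empty: "emeasure Sg {{}} = emeasure (\<nu> p) {{}} * emeasure (\<nu> q) {{}}"
proof -
  have "emeasure Sg {{}} = emeasure (\<nu> p \<Otimes>\<^sub>M \<nu> q) ({{}} \<times> {{}})"
    using emeasure_Sg[OF sing_empty_sets] pre_empty by (simp only:)
  also have "\<dots> = emeasure (\<nu> p) {{}} * emeasure (\<nu> q) {{}}"
    by (rule emeasure_pq_Times[OF sing_empty_sets sing_empty_sets])
  finally show ?thesis .
qed

end

lemma sqrt_min_le: "0 \<le> a \<Longrightarrow> 0 \<le> b \<Longrightarrow> min a b \<le> sqrt (a * b)"
proof -
  assume a: "0 \<le> a" and b: "0 \<le> b"
  have "min a b * min a b \<le> a * b" using a b by (intro mult_mono) auto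
  then have "sqrt (min a b * min a b) \<le> sqrt (a * b)" by (rule real_sqrt_le_mono)
  then show ?thesis using a b by simp
qed

lemma arith_final:
  fixes a0 a1 a2 a3 b0 b1 b2 b3 h1 h2 H :: real
  assumes nn: "0 \<le> a0" "0 \<le> a1" "0 \<le> a2" "0 \<le> a3" "0 \<le> b0" "0 \<le> b1" "0 \<le> b2" "0 \<le> b3"
    and sa: "a0 + a1 + a2 + a3 = 1" and sb: "b0 + b1 + b2 + b3 = 1"
    and H: "sqrt (a0 * b0) + sqrt (a1 * b1) * h1 + sqrt (a2 * b2) * h2 \<le> H"
  shows "1 - H \<le> \<bar>a0 - b0\<bar> + \<bar>a1 - b1\<bar> + \<bar>a2 - b2\<bar> + a3 + (a1 + b1) * \<bar>1 - h1\<bar> + (a2 + b2) * \<bar>1 - h2\<bar>"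
proof -
  have m: "a + b - \<bar>a - b\<bar> \<le> 2 * sqrt (a * b)" if "0 \<le> a" "0 \<le> b" for a b :: real
  proof -
    have "min a b * 2 = a + b - \<bar>a - b\<bar>" by (auto simp: min_def)
    then show ?thesis using sqrt_min_le[OF that] by linarith
  qed
  have u: "2 * sqrt (a * b) \<le> a + b" if "0 \<le> a" "0 \<le> b" for a b :: real
    using arith_geo_mean_sqrt[OF that] by (simp add: field_simps)
  have hh: "a + b - \<bar>a - b\<bar> - (a + b) * \<bar>1 - h\<bar> \<le> 2 * (sqrt (a * b) * h)"
    if "0 \<le> a" "0 \<le> b" for a b h :: real
  proof -
    have e: "sqrt (a * b) * h = sqrt (a * b) - sqrt (a * b) * (1 - h)" by (simp add: algebra_simps)
    have i1: "sqrt (a * b) * (1 - h) \<le> sqrt (a * b) * \<bar>1 - h\<bar>" by (intro mult_left_mono) (use that in auto)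
    have i2: "(2 * sqrt (a * b)) * \<bar>1 - h\<bar> \<le> (a + b) * \<bar>1 - h\<bar>" by (intro mult_right_mono u that) auto
    show ?thesis using m[OF that] e i1 i2 by (simp add: algebra_simps)
  qed
  have 0: "a0 + b0 - \<bar>a0 - b0\<bar> \<le> 2 * sqrt (a0 * b0)" using m nn by auto
  have 1: "a1 + b1 - \<bar>a1 - b1\<bar> - (a1 + b1) * \<bar>1 - h1\<bar> \<le> 2 * (sqrt (a1 * b1) * h1)" using hh nn by auto
  have 2: "a2 + b2 - \<bar>a2 - b2\<bar> - (a2 + b2) * \<bar>1 - h2\<bar> \<le> 2 * (sqrt (a2 * b2) * h2)" using hh nn by auto
  have q1: "0 \<le> (a1 + b1) * \<bar>1 - h1\<bar>" and q2: "0 \<le> (a2 + b2) * \<bar>1 - h2\<bar>" using nn by auto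
  have b3: "b3 \<le> a3 + \<bar>a0 - b0\<bar> + \<bar>a1 - b1\<bar> + \<bar>a2 - b2\<bar>" using sa sb by linarith
  have lin: "1 - HH \<le> d0 + d1 + d2 + a3 + P1 + P2"
    if "a0 + b0 - d0 \<le> 2 * s0" "a1 + b1 - d1 - P1 \<le> 2 * s1" "a2 + b2 - d2 - P2 \<le> 2 * s2"
      "s0 + s1 + s2 \<le> HH" "0 \<le> P1" "0 \<le> P2" "b3 \<le> a3 + d0 + d1 + d2"
      "0 \<le> d0" "0 \<le> d1" "0 \<le> d2"
    for d0 d1 d2 s0 s1 s2 HH P1 P2 :: real
    using that sa sb by linarith
  show ?thesis by (rule lin[OF 0 1 2 H q1 q2 b3]) auto
qed

lemma ennreal_cancel_div:
  fixes X Y C :: real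
  assumes "0 \<le> X" "0 < Y" "0 < C"
  shows "ennreal X * ennreal C / (ennreal Y * ennreal C) = ennreal X / ennreal Y"
proof -
  have "ennreal X * ennreal C / (ennreal Y * ennreal C) = ennreal (X * C) / ennreal (Y * C)"
    using assms by (simp add: ennreal_mult)
  also have "\<dots> = ennreal (X * C / (Y * C))" using assms by (intro divide_ennreal) auto
  also have "X * C / (Y * C) = X / Y" using assms by simp
  also have "ennreal (X / Y) = ennreal X / ennreal Y" using assms by (simp add: divide_ennreal)
  finally show ?thesis .
qed

context fpq begin

lemma P_ident1:
  assumes pos: "measure Sg E10s > 0"
  shows "distr (cond_measure Sg E10s) (Cmeas p) phi1 = cond_measure (\<nu> p) {Z \<in> space (\<nu> p). Z \<noteq> {}}"
proof -
  interpret P: prob_space "\<nu> p" by (rule pq_basic)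
  interpret Q: prob_space "\<nu> q" by (rule pq_basic)
  interpret S: prob_space Sg by (rule Sg_prob)
  let ?ne = "{Z \<in> closed_sets_on p. Z \<noteq> {}}"
  have spn: "{Z \<in> space (\<nu> p). Z \<noteq> {}} = ?ne" using pq_basic by simp
  have ne_sets: "?ne \<in> sets (Cmeas p)" by (rule nonempty_sets)
  have sp1: "phi1 -` closed_sets_on p \<inter> closed_sets_on (p+q) = closed_sets_on (p+q)"
    using measurable_space[OF phi1_meas] by auto
  have E10sub: "E10s \<subseteq> closed_sets_on (p+q)" unfolding E10s_def by auto
  have SE: "emeasure Sg E10s = emeasure (\<nu> p) ?ne * emeasure (\<nu> q) {{}}"
    using Sg_E10_pre[of "closed_sets_on p"] sets.top[of "Cmeas p"] sp1 E10sub
    by (simp add: Int_absorb1)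
  have SEm: "measure Sg E10s = measure (\<nu> p) ?ne * measure (\<nu> q) {{}}"
    using SE by (simp add: S.emeasure_eq_measure P.emeasure_eq_measure Q.emeasure_eq_measure ennreal_mult[symmetric])
  then have pos1: "measure (\<nu> p) ?ne > 0" and pos2: "measure (\<nu> q) {{}} > 0"
    using pos by (auto simp: zero_less_mult_iff)
  show ?thesis
  proof (rule measure_eqI)
    show "sets (distr (cond_measure Sg E10s) (Cmeas p) phi1) = sets (cond_measure (\<nu> p) {Z \<in> space (\<nu> p). Z \<noteq> {}})"
      using pq_basic by simp
    fix B assume "B \<in> sets (distr (cond_measure Sg E10s) (Cmeas p) phi1)"
    then have B: "B \<in> sets (Cmeas p)" by simp
    have phic: "phi1 \<in> measurable (cond_measure Sg E10s) (Cmeas p)"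
      using phi1_meas by (subst measurable_cong_sets[of _ "Cmeas (p+q)" _ "Cmeas p"]) simp_all
    have pre: "phi1 -` B \<inter> closed_sets_on (p+q) \<in> sets Sg"
      using measurable_sets[OF phi1_meas B] by simp
    have Bne: "B \<inter> ?ne \<in> sets (\<nu> p)" using B ne_sets pq_basic by auto
    have "emeasure (distr (cond_measure Sg E10s) (Cmeas p) phi1) B
        = emeasure (cond_measure Sg E10s) (phi1 -` B \<inter> closed_sets_on (p+q))"
      using emeasure_distr[OF phic B] by simp
    also have "\<dots> = emeasure Sg ((phi1 -` B \<inter> closed_sets_on (p+q)) \<inter> E10s) / emeasure Sg E10s"
      using E_sets pre by (intro cond_measure_emeasure) auto
    also have "\<dots> = emeasure (\<nu> p) (B \<inter> ?ne) * emeasure (\<nu> q) {{}} / (emeasure (\<nu> p) ?ne * emeasure (\<nu> q) {{}})"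
      using Sg_E10_pre[OF B] SE by simp
    also have "\<dots> = emeasure (\<nu> p) (B \<inter> ?ne) / emeasure (\<nu> p) ?ne"
      unfolding P.emeasure_eq_measure Q.emeasure_eq_measure
      by (rule ennreal_cancel_div[OF _ pos1 pos2]) simp
    also have "\<dots> = emeasure (cond_measure (\<nu> p) {Z \<in> space (\<nu> p). Z \<noteq> {}}) B"
      unfolding spn using B Bne ne_sets pq_basic by (subst cond_measure_emeasure) auto
    finally show "emeasure (distr (cond_measure Sg E10s) (Cmeas p) phi1) B
        = emeasure (cond_measure (\<nu> p) {Z \<in> space (\<nu> p). Z \<noteq> {}}) B" .
  qed
qed

lemma P_ident2:
  assumes pos: "measure Sg E01s > 0"
  shows "distr (cond_measure Sg E01s) (Cmeas q) phi2 = cond_measure (\<nu> q) {Z \<in> space (\<nu> q). Z \<noteq> {}}"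
proof -
  interpret P: prob_space "\<nu> p" by (rule pq_basic)
  interpret Q: prob_space "\<nu> q" by (rule pq_basic)
  interpret S: prob_space Sg by (rule Sg_prob)
  let ?ne = "{Z \<in> closed_sets_on q. Z \<noteq> {}}"
  have spn: "{Z \<in> space (\<nu> q). Z \<noteq> {}} = ?ne" using pq_basic by simp
  have ne_sets: "?ne \<in> sets (Cmeas q)" by (rule nonempty_sets)
  have sp1: "phi2 -` closed_sets_on q \<inter> closed_sets_on (p+q) = closed_sets_on (p+q)"
    using measurable_space[OF phi2_meas] by auto
  have E01sub: "E01s \<subseteq> closed_sets_on (p+q)" unfolding E01s_def by auto
  have SE: "emeasure Sg E01s = emeasure (\<nu> p) {{}} * emeasure (\<nu> q) ?ne"
    using Sg_E01_pre[of "closed_sets_on q"] sets.top[of "Cmeas q"] sp1 E01sub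
    by (simp add: Int_absorb1)
  have SEm: "measure Sg E01s = measure (\<nu> p) {{}} * measure (\<nu> q) ?ne"
    using SE by (simp add: S.emeasure_eq_measure P.emeasure_eq_measure Q.emeasure_eq_measure ennreal_mult[symmetric])
  then have pos1: "measure (\<nu> q) ?ne > 0" and pos2: "measure (\<nu> p) {{}} > 0"
    using pos by (auto simp: zero_less_mult_iff)
  show ?thesis
  proof (rule measure_eqI)
    show "sets (distr (cond_measure Sg E01s) (Cmeas q) phi2) = sets (cond_measure (\<nu> q) {Z \<in> space (\<nu> q). Z \<noteq> {}})"
      using pq_basic by simp
    fix B assume "B \<in> sets (distr (cond_measure Sg E01s) (Cmeas q) phi2)"
    then have B: "B \<in> sets (Cmeas q)" by simp
    have phic: "phi2 \<in> measurable (cond_measure Sg E01s) (Cmeas q)"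
      using phi2_meas by (subst measurable_cong_sets[of _ "Cmeas (p+q)" _ "Cmeas q"]) simp_all
    have pre: "phi2 -` B \<inter> closed_sets_on (p+q) \<in> sets Sg"
      using measurable_sets[OF phi2_meas B] by simp
    have Bne: "B \<inter> ?ne \<in> sets (\<nu> q)" using B ne_sets pq_basic by auto
    have "emeasure (distr (cond_measure Sg E01s) (Cmeas q) phi2) B
        = emeasure (cond_measure Sg E01s) (phi2 -` B \<inter> closed_sets_on (p+q))"
      using emeasure_distr[OF phic B] by simp
    also have "\<dots> = emeasure Sg ((phi2 -` B \<inter> closed_sets_on (p+q)) \<inter> E01s) / emeasure Sg E01s"
      using E_sets pre by (intro cond_measure_emeasure) auto
    also have "\<dots> = emeasure (\<nu> q) (B \<inter> ?ne) * emeasure (\<nu> p) {{}} / (emeasure (\<nu> q) ?ne * emeasure (\<nu> p) {{}})"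
      using Sg_E01_pre[OF B] SE by (simp add: mult.commute)
    also have "\<dots> = emeasure (\<nu> q) (B \<inter> ?ne) / emeasure (\<nu> q) ?ne"
      unfolding P.emeasure_eq_measure Q.emeasure_eq_measure
      by (rule ennreal_cancel_div[OF _ pos1 pos2]) simp
    also have "\<dots> = emeasure (cond_measure (\<nu> q) {Z \<in> space (\<nu> q). Z \<noteq> {}}) B"
      unfolding spn using B Bne ne_sets pq_basic by (subst cond_measure_emeasure) auto
    finally show "emeasure (distr (cond_measure Sg E01s) (Cmeas q) phi2) B
        = emeasure (cond_measure (\<nu> q) {Z \<in> space (\<nu> q). Z \<noteq> {}}) B" .
  qed
qed

lemma psi1_meas: "(\<lambda>W. W) \<in> measurable (Cmeas p) (Cmeas (p+q))"
  using measurable_psi1[of p q] p q by simp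

lemma psi2_meas: "(\<lambda>W. (+) p ` W) \<in> measurable (Cmeas q) (Cmeas (p+q))"
  using measurable_psi2[of p q] p q by simp

lemma inv1: "Z \<in> E10s \<Longrightarrow> phi1 Z = Z"
  unfolding E10s_def phi1_def using closed_sets_on_sub[of Z "p+q"] by fastforce

lemma inv2: "Z \<in> E01s \<Longrightarrow> (+) p ` (phi2 Z) = Z"
proof -
  assume Z: "Z \<in> E01s"
  then have s: "Z \<subseteq> {p..p+q}" unfolding E01s_def using closed_sets_on_sub[of Z "p+q"] by fastforce
  have "(+) p ` (phi2 Z) = (\<lambda>r. p + (r - p)) ` (Z \<inter> {p..p+q})" unfolding phi2_def by (simp add: image_image)
  also have "\<dots> = Z \<inter> {p..p+q}" by simp
  finally show ?thesis using s by auto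
qed

end

lemma (in finite_measure) measure_Un4:
  assumes "A \<in> sets M" "B \<in> sets M" "C \<in> sets M" "D \<in> sets M"
    "A \<inter> B = {}" "A \<inter> C = {}" "A \<inter> D = {}" "B \<inter> C = {}" "B \<inter> D = {}" "C \<inter> D = {}"
  shows "measure M (A \<union> B \<union> C \<union> D) = measure M A + measure M B + measure M C + measure M D"
proof -
  have "measure M (A \<union> B \<union> C \<union> D) = measure M (A \<union> B \<union> C) + measure M D"
    using assms by (intro finite_measure_Union) auto
  moreover have "measure M (A \<union> B \<union> C) = measure M (A \<union> B) + measure M C"
    using assms by (intro finite_measure_Union) auto
  moreover have "measure M (A \<union> B) = measure M A + measure M B"
    using assms by (intro finite_measure_Union) auto
  ultimately show ?thesis by simp
qed

context fpq begin

lemma main_bound: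
  "1 - hellinger (\<nu> (p+q)) Sg \<le>
     \<bar>measure (\<nu> (p+q)) {{}} - measure (\<nu> p) {{}} * measure (\<nu> q) {{}}\<bar>
   + \<bar>measure (\<nu> (p+q)) E10s - measure Sg E10s\<bar>
   + \<bar>measure (\<nu> (p+q)) E01s - measure Sg E01s\<bar>
   + measure (\<nu> (p+q)) E11s
   + (measure (\<nu> (p+q)) E10s + measure Sg E10s) * \<bar>1 - hellinger (distr (cond_measure (\<nu> (p+q)) E10s) (Cmeas p) phi1) (cond_measure (\<nu> p) {Z \<in> space (\<nu> p). Z \<noteq> {}})\<bar>
   + (measure (\<nu> (p+q)) E01s + measure Sg E01s) * \<bar>1 - hellinger (distr (cond_measure (\<nu> (p+q)) E01s) (Cmeas q) phi2) (cond_measure (\<nu> q) {Z \<in> space (\<nu> q). Z \<noteq> {}})\<bar>"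
  (is "1 - ?H \<le> _")
proof -
  let ?N = "\<nu> (p+q)"
  interpret N: prob_space ?N by (rule pq_basic)
  interpret S: prob_space Sg by (rule Sg_prob)
  interpret P: prob_space "\<nu> p" by (rule pq_basic)
  interpret Q: prob_space "\<nu> q" by (rule pq_basic)
  have se: "sets Sg = sets ?N" using pq_basic by simp
  obtain m f g where fm: "finite_measure m" and sm: "sets m = sets ?N" "space m = space ?N"
    and f[measurable]: "f \<in> borel_measurable m" and g[measurable]: "g \<in> borel_measurable m"
    and f0: "\<And>x. 0 \<le> f x" and g0: "\<And>x. 0 \<le> g x" and fi: "integrable m f" and gi: "integrable m g"
    and dr: "?N = density m (\<lambda>x. ennreal (f x))" and de: "Sg = density m (\<lambda>x. ennreal (g x))"
    and H: "?H = (\<integral>x. sqrt (f x * g x) \<partial>m)"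
    using hellinger_rep[OF N.prob_space_axioms S.prob_space_axioms se] by blast
  have msets: "sets m = sets (Cmeas (p+q))" using sm pq_basic by simp
  have A0m: "{{}} \<in> sets m" using msets sing_empty_sets by simp
  have E10m: "E10s \<in> sets m" and E01m: "E01s \<in> sets m" and E11m: "E11s \<in> sets m"
    using msets E_sets by simp_all
  define a0 where "a0 = measure ?N {{}}"
  define b0 where "b0 = measure Sg {{}}"
  define a1 where "a1 = measure ?N E10s"
  define b1 where "b1 = measure Sg E10s"
  define a2 where "a2 = measure ?N E01s"
  define b2 where "b2 = measure Sg E01s"
  define a3 where "a3 = measure ?N E11s"
  define b3 where "b3 = measure Sg E11s"
  define h1 where "h1 = hellinger (distr (cond_measure ?N E10s) (Cmeas p) phi1) (cond_measure (\<nu> p) {Z \<in> space (\<nu> p). Z \<noteq> {}})"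
  define h2 where "h2 = hellinger (distr (cond_measure ?N E01s) (Cmeas q) phi2) (cond_measure (\<nu> q) {Z \<in> space (\<nu> q). Z \<noteq> {}})"
  have b0e: "b0 = measure (\<nu> p) {{}} * measure (\<nu> q) {{}}"
    unfolding b0_def using Sg_empty
    by (simp add: S.emeasure_eq_measure P.emeasure_eq_measure Q.emeasure_eq_measure ennreal_mult[symmetric])
  have NE: "{{}} \<in> sets ?N" "E10s \<in> sets ?N" "E01s \<in> sets ?N" "E11s \<in> sets ?N"
    using A0m E10m E01m E11m sm by simp_all
  have SE: "{{}} \<in> sets Sg" "E10s \<in> sets Sg" "E01s \<in> sets Sg" "E11s \<in> sets Sg"
    using A0m E10m E01m E11m msets by simp_all
  have spN: "space ?N = {{}} \<union> E10s \<union> E01s \<union> E11s" using partition(1) pq_basic by simp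
  have sa: "a0 + a1 + a2 + a3 = 1"
  proof -
    have "measure ?N ({{}} \<union> E10s \<union> E01s \<union> E11s) = 1" using spN N.prob_space by simp
    moreover have "measure ?N ({{}} \<union> E10s \<union> E01s \<union> E11s) = a0 + a1 + a2 + a3"
      unfolding a0_def a1_def a2_def a3_def using NE partition by (intro N.measure_Un4) auto
    ultimately show ?thesis by simp
  qed
  have sb: "b0 + b1 + b2 + b3 = 1"
  proof -
    have "measure Sg ({{}} \<union> E10s \<union> E01s \<union> E11s) = 1" using partition(1) S.prob_space by simp
    moreover have "measure Sg ({{}} \<union> E10s \<union> E01s \<union> E11s) = b0 + b1 + b2 + b3"
      unfolding b0_def b1_def b2_def b3_def using SE partition by (intro S.measure_Un4) auto
    ultimately show ?thesis by simp
  qed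
  have sq_int: "integrable m (\<lambda>x. sqrt (f x * g x))"
  proof -
    have gm: "\<And>x. sqrt (f x * g x) \<le> (f x + g x) / 2" using arith_geo_mean_sqrt f0 g0 by blast
    have gm2: "\<And>x. sqrt (f x * g x) * 2 \<le> f x + g x" using gm by (metis le_divide_eq_numeral1(1))
    show ?thesis
      by (rule Bochner_Integration.integrable_bound[of _ "\<lambda>x. (f x + g x) / 2"])
         (auto intro!: fi gi AE_I2 simp: f0 g0 gm gm2)
  qed
  have ind_int: "integrable m (\<lambda>x. sqrt (f x * g x) * indicator A x)" if "A \<in> sets m" for A
    using integrable_mult_indicator[OF that sq_int] by (simp add: mult.commute)
  have T0: "(\<integral>x. sqrt (f x * g x) * indicator {{}} x \<partial>m) = sqrt (a0 * b0)"
    using hellinger_singleton_piece[OF fm f g f0 g0 fi gi A0m] dr de unfolding a0_def b0_def by simp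
  have phi1m: "phi1 \<in> measurable m (Cmeas p)"
    using phi1_meas by (subst measurable_cong_sets[of _ "Cmeas (p+q)" _ "Cmeas p"]) (simp_all add: msets)
  have phi2m: "phi2 \<in> measurable m (Cmeas q)"
    using phi2_meas by (subst measurable_cong_sets[of _ "Cmeas (p+q)" _ "Cmeas q"]) (simp_all add: msets)
  have psi1m: "(\<lambda>W. W) \<in> measurable (Cmeas p) m"
    using psi1_meas by (subst measurable_cong_sets[of _ "Cmeas p" _ "Cmeas (p+q)"]) (simp_all add: msets)
  have psi2m: "(\<lambda>W. (+) p ` W) \<in> measurable (Cmeas q) m"
    using psi2_meas by (subst measurable_cong_sets[of _ "Cmeas q" _ "Cmeas (p+q)"]) (simp_all add: msets)
  have T1: "sqrt (a1 * b1) * h1 \<le> (\<integral>x. sqrt (f x * g x) * indicator E10s x \<partial>m)"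
  proof (cases "a1 > 0 \<and> b1 > 0")
    case True
    then have a: "measure (density m (\<lambda>x. ennreal (f x))) E10s > 0"
      and b: "measure (density m (\<lambda>x. ennreal (g x))) E10s > 0"
      unfolding a1_def b1_def using dr de by simp_all
    have "sqrt (a1 * b1) * h1 = (\<integral>x. sqrt (f x * g x) * indicator E10s x \<partial>m)"
      using hellinger_cond_piece[OF fm f g f0 g0 fi gi E10m a b phi1m psi1m inv1] dr de
        P_ident1 True unfolding a1_def b1_def h1_def by simp
    then show ?thesis by simp
  next
    case False
    then have "a1 * b1 = 0" unfolding a1_def b1_def by (auto simp: not_less antisym)
    then have "sqrt (a1 * b1) * h1 = 0" by (simp only: real_sqrt_zero mult_zero_left)
    moreover have "0 \<le> (\<integral>x. sqrt (f x * g x) * indicator E10s x \<partial>m)"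
      by (intro integral_nonneg_AE) (auto intro!: AE_I2 mult_nonneg_nonneg simp: f0 g0)
    ultimately show ?thesis by linarith
  qed
  have T2: "sqrt (a2 * b2) * h2 \<le> (\<integral>x. sqrt (f x * g x) * indicator E01s x \<partial>m)"
  proof (cases "a2 > 0 \<and> b2 > 0")
    case True
    then have a: "measure (density m (\<lambda>x. ennreal (f x))) E01s > 0"
      and b: "measure (density m (\<lambda>x. ennreal (g x))) E01s > 0"
      unfolding a2_def b2_def using dr de by simp_all
    have "sqrt (a2 * b2) * h2 = (\<integral>x. sqrt (f x * g x) * indicator E01s x \<partial>m)"
      using hellinger_cond_piece[OF fm f g f0 g0 fi gi E01m a b phi2m psi2m inv2] dr de
        P_ident2 True unfolding a2_def b2_def h2_def by simp
    then show ?thesis by simp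
  next
    case False
    then have "a2 * b2 = 0" unfolding a2_def b2_def by (auto simp: not_less antisym)
    then have "sqrt (a2 * b2) * h2 = 0" by (simp only: real_sqrt_zero mult_zero_left)
    moreover have "0 \<le> (\<integral>x. sqrt (f x * g x) * indicator E01s x \<partial>m)"
      by (intro integral_nonneg_AE) (auto intro!: AE_I2 mult_nonneg_nonneg simp: f0 g0)
    ultimately show ?thesis by linarith
  qed
  have Hge: "sqrt (a0 * b0) + sqrt (a1 * b1) * h1 + sqrt (a2 * b2) * h2 \<le> ?H"
  proof -
    have "(\<integral>x. sqrt (f x * g x) * indicator {{}} x \<partial>m) + (\<integral>x. sqrt (f x * g x) * indicator E10s x \<partial>m)
        + (\<integral>x. sqrt (f x * g x) * indicator E01s x \<partial>m)
        = (\<integral>x. sqrt (f x * g x) * indicator {{}} x + sqrt (f x * g x) * indicator E10s x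
             + sqrt (f x * g x) * indicator E01s x \<partial>m)"
      using ind_int[OF A0m] ind_int[OF E10m] ind_int[OF E01m] by simp
    also have "\<dots> \<le> (\<integral>x. sqrt (f x * g x) \<partial>m)"
    proof (rule integral_mono)
      show "integrable m (\<lambda>x. sqrt (f x * g x) * indicator {{}} x + sqrt (f x * g x) * indicator E10s x
             + sqrt (f x * g x) * indicator E01s x)"
        using ind_int[OF A0m] ind_int[OF E10m] ind_int[OF E01m] by auto
      show "integrable m (\<lambda>x. sqrt (f x * g x))" by (rule sq_int)
      fix x
      have "indicator {{}} x + indicator E10s x + indicator E01s x \<le> (1::real)"
        using partition by (auto simp: indicator_def)
      then have "sqrt (f x * g x) * (indicator {{}} x + indicator E10s x + indicator E01s x) \<le> sqrt (f x * g x) * 1"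
        by (intro mult_left_mono) (auto intro!: mult_nonneg_nonneg simp: f0 g0)
      then show "sqrt (f x * g x) * indicator {{}} x + sqrt (f x * g x) * indicator E10s x
             + sqrt (f x * g x) * indicator E01s x \<le> sqrt (f x * g x)"
        by (simp add: algebra_simps)
    qed
    finally show ?thesis using T0 T1 T2 H by linarith
  qed
  have nn: "0 \<le> a0" "0 \<le> a1" "0 \<le> a2" "0 \<le> a3" "0 \<le> b0" "0 \<le> b1" "0 \<le> b2" "0 \<le> b3"
    unfolding a0_def a1_def a2_def a3_def b0_def b1_def b2_def b3_def by simp_all
  have "1 - ?H \<le> \<bar>a0 - b0\<bar> + \<bar>a1 - b1\<bar> + \<bar>a2 - b2\<bar> + a3 + (a1 + b1) * \<bar>1 - h1\<bar> + (a2 + b2) * \<bar>1 - h2\<bar>"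
    by (rule arith_final[OF nn sa sb Hge])
  then show ?thesis unfolding a0_def a1_def a2_def a3_def b0e b1_def b2_def h1_def h2_def by simp
qed

lemma H_le1: "hellinger (\<nu> (p+q)) Sg \<le> 1"
  using hellinger_le_1[OF pq_basic(7) Sg_prob] pq_basic by simp

end

lemma final_arith:
  fixes X A0 A1 A2 A3 a1 b1 a2 b2 D1 D2 u c0 c1 c2 c3 k1 k2 cn :: real
  assumes MB: "X \<le> A0 + A1 + A2 + A3 + (a1 + b1) * D1 + (a2 + b2) * D2"
    and u: "0 < u" "u \<le> 1"
    and A: "A0 \<le> c0 * u^2" "A1 \<le> c1 * u^2" "A2 \<le> c2 * u^2" "A3 \<le> c3 * u^2"
    and D: "0 \<le> D1" "0 \<le> D2" "D1 \<le> k1 * u" "D2 \<le> k2 * u"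
    and a: "0 \<le> a1" "0 \<le> a2" "a1 \<le> cn * u" "a2 \<le> cn * u" "0 \<le> b1" "0 \<le> b2"
      "b1 \<le> a1 + A1" "b2 \<le> a2 + A2"
    and c: "0 \<le> c1" "0 \<le> c2" "0 \<le> cn"
  shows "X \<le> (c0 + c1 + c2 + c3 + (2 * cn + c1) * k1 + (2 * cn + c2) * k2) * u^2"
proof -
  have uu: "u^2 \<le> u" using u by (simp add: power2_eq_square mult_le_cancel_left1)
  have s1: "a1 + b1 \<le> (2 * cn + c1) * u"
  proof -
    have "c1 * u^2 \<le> c1 * u" using uu c by (intro mult_left_mono) auto
    then show ?thesis using a A by (simp add: algebra_simps)
  qed
  have s2: "a2 + b2 \<le> (2 * cn + c2) * u"
  proof -
    have "c2 * u^2 \<le> c2 * u" using uu c by (intro mult_left_mono) auto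
    then show ?thesis using a A by (simp add: algebra_simps)
  qed
  have p1: "(a1 + b1) * D1 \<le> ((2 * cn + c1) * u) * (k1 * u)"
    using s1 D a by (intro mult_mono) auto
  have p2: "(a2 + b2) * D2 \<le> ((2 * cn + c2) * u) * (k2 * u)"
    using s2 D a by (intro mult_mono) auto
  have e: "((2 * cn + c1) * u) * (k1 * u) = (2 * cn + c1) * k1 * u^2"
    "((2 * cn + c2) * u) * (k2 * u) = (2 * cn + c2) * k2 * u^2"
    by (simp_all add: power2_eq_square)
  show ?thesis using MB A p1 p2 e by (simp add: algebra_simps)
qed

theorem corollary4p24:
  fixes \<nu> :: "real \<Rightarrow> real set measure" and s t :: real
  assumes fam: "meas_fact_family \<nu>"
    and s_pos: "s > 0" and t_pos: "t > 0"
  defines "E10 \<equiv> \<lambda>l. {Z \<in> space (\<nu> (l * (s+t))). Z \<inter> {0 .. (l * s)} \<noteq> {} \<and> Z \<inter> {(l * s) .. (l * (s+t))} = {}}"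
    and "E01 \<equiv> \<lambda>l. {Z \<in> space (\<nu> (l * (s+t))). Z \<inter> {0 .. (l * s)} = {} \<and> Z \<inter> {(l * s) .. (l * (s+t))} \<noteq> {}}"
    and "E11 \<equiv> \<lambda>l. {Z \<in> space (\<nu> (l * (s+t))). Z \<inter> {0 .. (l * s)} \<noteq> {} \<and> Z \<inter> {(l * s) .. (l * (s+t))} \<noteq> {}}"
    and "\<sigma> \<equiv> \<lambda>l. distr (\<nu> (l * s) \<Otimes>\<^sub>M \<nu> (l * t)) (Cmeas (l * (s+t))) (oplus (l * s))"
    and "nonempty \<equiv> \<lambda>r. {Z \<in> space (\<nu> r). Z \<noteq> {}}"
  assumes i_u: "(\<lambda>l. measure (\<nu> (l * (s+t))) (nonempty (l * (s+t)))) \<in> O[at_right 0](\<lambda>l. l * (s+t))"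
    and i_u1: "(\<lambda>l. measure (\<nu> (l * s)) (nonempty (l * s))) \<in> O[at_right 0](\<lambda>l. l * s)"
    and i_u2: "(\<lambda>l. measure (\<nu> (l * t)) (nonempty (l * t))) \<in> O[at_right 0](\<lambda>l. l * t)"
    and ii: "(\<lambda>l. measure (\<nu> (l * (s+t))) (E11 l)) \<in> O[at_right 0](\<lambda>l. (l * (s+t))^2)"
    and iii: "(\<lambda>l. \<bar>measure (\<nu> (l * (s+t))) {{}} - measure (\<nu> (l * s)) {{}} * measure (\<nu> (l * t)) {{}}\<bar>)
              \<in> O[at_right 0](\<lambda>l. (l * (s+t))^2)"
    and iva10: "(\<lambda>l. \<bar>measure (\<nu> (l * (s+t))) (E10 l) - measure (\<sigma> l) (E10 l)\<bar>)
              \<in> O[at_right 0](\<lambda>l. (l * (s+t))^2)"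
    and iva01: "(\<lambda>l. \<bar>measure (\<nu> (l * (s+t))) (E01 l) - measure (\<sigma> l) (E01 l)\<bar>)
              \<in> O[at_right 0](\<lambda>l. (l * (s+t))^2)"
    and ivb10: "(\<lambda>l. 1 - hellinger
                 (distr (cond_measure (\<nu> (l * (s+t))) (E10 l)) (Cmeas (l * s)) (\<lambda>Z. Z \<inter> {0 .. (l * s)}))
                 (cond_measure (\<nu> (l * s)) (nonempty (l * s))))
              \<in> O[at_right 0](\<lambda>l. l * (s+t))"
    and ivb01: "(\<lambda>l. 1 - hellinger
                 (distr (cond_measure (\<nu> (l * (s+t))) (E01 l)) (Cmeas (l * t))
                    (\<lambda>Z. (\<lambda>r. r - l * s) ` (Z \<inter> {(l * s) .. (l * (s+t))})))
                 (cond_measure (\<nu> (l * t)) (nonempty (l * t))))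
              \<in> O[at_right 0](\<lambda>l. l * (s+t))"
  shows "(\<lambda>l. 1 - hellinger (\<nu> (l * (s+t))) (\<sigma> l)) \<in> O[at_right 0](\<lambda>l. (l * (s+t))^2)"
proof -
  obtain cn where cn: "cn > 0" "eventually (\<lambda>l. norm (measure (\<nu> (l * (s+t))) (nonempty (l * (s+t)))) \<le> cn * norm (l * (s+t))) (at_right 0)"
    using i_u by (elim landau_o.bigE)
  obtain c3 where c3: "c3 > 0" "eventually (\<lambda>l. norm (measure (\<nu> (l * (s+t))) (E11 l)) \<le> c3 * norm ((l * (s+t))^2)) (at_right 0)"
    using ii by (elim landau_o.bigE)
  obtain c0 where c0: "c0 > 0" "eventually (\<lambda>l. norm (\<bar>measure (\<nu> (l * (s+t))) {{}} - measure (\<nu> (l * s)) {{}} * measure (\<nu> (l * t)) {{}}\<bar>) \<le> c0 * norm ((l * (s+t))^2)) (at_right 0)"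
    using iii by (elim landau_o.bigE)
  obtain c1 where c1: "c1 > 0" "eventually (\<lambda>l. norm (\<bar>measure (\<nu> (l * (s+t))) (E10 l) - measure (\<sigma> l) (E10 l)\<bar>) \<le> c1 * norm ((l * (s+t))^2)) (at_right 0)"
    using iva10 by (elim landau_o.bigE)
  obtain c2 where c2: "c2 > 0" "eventually (\<lambda>l. norm (\<bar>measure (\<nu> (l * (s+t))) (E01 l) - measure (\<sigma> l) (E01 l)\<bar>) \<le> c2 * norm ((l * (s+t))^2)) (at_right 0)"
    using iva01 by (elim landau_o.bigE)
  obtain k1 where k1: "k1 > 0" "eventually (\<lambda>l. norm (1 - hellinger
                 (distr (cond_measure (\<nu> (l * (s+t))) (E10 l)) (Cmeas (l * s)) (\<lambda>Z. Z \<inter> {0 .. (l * s)}))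
                 (cond_measure (\<nu> (l * s)) (nonempty (l * s)))) \<le> k1 * norm (l * (s+t))) (at_right 0)"
    using ivb10 by (elim landau_o.bigE)
  obtain k2 where k2: "k2 > 0" "eventually (\<lambda>l. norm (1 - hellinger
                 (distr (cond_measure (\<nu> (l * (s+t))) (E01 l)) (Cmeas (l * t))
                    (\<lambda>Z. (\<lambda>r. r - l * s) ` (Z \<inter> {(l * s) .. (l * (s+t))})))
                 (cond_measure (\<nu> (l * t)) (nonempty (l * t)))) \<le> k2 * norm (l * (s+t))) (at_right 0)"
    using ivb01 by (elim landau_o.bigE)
  have st: "s + t > 0" using s_pos t_pos by simp
  have ev0: "eventually (\<lambda>l. 0 < l \<and> l * (s+t) \<le> 1) (at_right (0::real))"
    unfolding eventually_at_right_field
  proof (intro exI[of _ "1 / (s+t)"] conjI allI impI)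
    show "0 < 1 / (s+t)" using st by simp
    fix y :: real assume "0 < y" "y < 1 / (s+t)"
    then show "0 < y" "y * (s+t) \<le> 1" using st by (auto simp: field_simps)
  qed
  let ?C = "c0 + c1 + c2 + c3 + (2 * cn + c1) * k1 + (2 * cn + c2) * k2"
  show ?thesis
  proof (rule bigoI[of _ ?C])
    show "eventually (\<lambda>l. norm (1 - hellinger (\<nu> (l * (s+t))) (\<sigma> l)) \<le> ?C * norm ((l * (s+t))^2)) (at_right 0)"
      using ev0 cn(2) c0(2) c1(2) c2(2) c3(2) k1(2) k2(2)
    proof eventually_elim
      case (elim l)
      then have l: "0 < l" and ule: "l * (s+t) \<le> 1" by auto
      interpret F: fpq \<nu> "l * s" "l * t"
        using fam s_pos t_pos l by unfold_locales auto
      have ueq: "l * (s+t) = l * s + l * t" by (simp add: distrib_left)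
      have spu: "space (\<nu> (l * s + l * t)) = closed_sets_on (l * s + l * t)" by (rule F.pq_basic)
      have e1: "E10 l = F.E10s" unfolding E10_def F.E10s_def ueq spu by simp
      have e2: "E01 l = F.E01s" unfolding E01_def F.E01s_def ueq spu by simp
      have e3: "E11 l = F.E11s" unfolding E11_def F.E11s_def ueq spu by simp
      have e4: "\<sigma> l = F.Sg" unfolding \<sigma>_def F.Sg_def ueq by simp
      have e5: "(\<lambda>Z. Z \<inter> {0 .. (l * s)}) = F.phi1" unfolding F.phi1_def by simp
      have e6: "(\<lambda>Z. (\<lambda>r. r - l * s) ` (Z \<inter> {(l * s) .. (l * s + l * t)})) = F.phi2" unfolding F.phi2_def by simp
      have e7: "nonempty r = {Z \<in> space (\<nu> r). Z \<noteq> {}}" for r unfolding nonempty_def by simp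
      let ?p = "l * s" and ?q = "l * t"
      have lp: "0 < ?p" "0 < ?q" using l s_pos t_pos by simp_all
      have pq: "0 < ?p + ?q" "?p + ?q \<le> 1" using lp ule ueq by auto
      note facts = elim[unfolded ueq e1 e2 e3 e4 e5 e6 e7]
      interpret N: prob_space "\<nu> (?p + ?q)" by (rule F.pq_basic)
      have nesets: "{Z \<in> space (\<nu> (?p + ?q)). Z \<noteq> {}} \<in> sets (\<nu> (?p + ?q))"
        using F.nonempty_sets F.pq_basic by simp
      have E10sub: "F.E10s \<subseteq> {Z \<in> space (\<nu> (?p + ?q)). Z \<noteq> {}}" unfolding F.E10s_def F.pq_basic by auto
      have E01sub: "F.E01s \<subseteq> {Z \<in> space (\<nu> (?p + ?q)). Z \<noteq> {}}" unfolding F.E01s_def F.pq_basic by auto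
      have a1ne: "measure (\<nu> (?p + ?q)) F.E10s \<le> measure (\<nu> (?p + ?q)) {Z \<in> space (\<nu> (?p + ?q)). Z \<noteq> {}}"
        by (rule N.finite_measure_mono[OF E10sub nesets])
      have a2ne: "measure (\<nu> (?p + ?q)) F.E01s \<le> measure (\<nu> (?p + ?q)) {Z \<in> space (\<nu> (?p + ?q)). Z \<noteq> {}}"
        by (rule N.finite_measure_mono[OF E01sub nesets])
      have nb: "measure (\<nu> (?p + ?q)) {Z \<in> space (\<nu> (?p + ?q)). Z \<noteq> {}} \<le> cn * (?p + ?q)"
        using facts(2) pq by simp
      have X0: "0 \<le> 1 - hellinger (\<nu> (?p + ?q)) F.Sg" using F.H_le1 by simp
      have fin: "1 - hellinger (\<nu> (?p + ?q)) F.Sg \<le> ?C * (?p + ?q)^2"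
      proof (rule final_arith[OF F.main_bound pq])
        show "\<bar>measure (\<nu> (?p + ?q)) {{}} - measure (\<nu> ?p) {{}} * measure (\<nu> ?q) {{}}\<bar> \<le> c0 * (?p + ?q)^2"
          using facts(3) by simp
        show "\<bar>measure (\<nu> (?p + ?q)) F.E10s - measure F.Sg F.E10s\<bar> \<le> c1 * (?p + ?q)^2"
          using facts(4) by simp
        show "\<bar>measure (\<nu> (?p + ?q)) F.E01s - measure F.Sg F.E01s\<bar> \<le> c2 * (?p + ?q)^2"
          using facts(5) by simp
        show "measure (\<nu> (?p + ?q)) F.E11s \<le> c3 * (?p + ?q)^2"
          using facts(6) by simp
        show "\<bar>1 - hellinger (distr (cond_measure (\<nu> (?p + ?q)) F.E10s) (Cmeas ?p) F.phi1)
            (cond_measure (\<nu> ?p) {Z \<in> space (\<nu> ?p). Z \<noteq> {}})\<bar> \<le> k1 * (?p + ?q)"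
          using facts(7) pq by simp
        show "\<bar>1 - hellinger (distr (cond_measure (\<nu> (?p + ?q)) F.E01s) (Cmeas ?q) F.phi2)
            (cond_measure (\<nu> ?q) {Z \<in> space (\<nu> ?q). Z \<noteq> {}})\<bar> \<le> k2 * (?p + ?q)"
          using facts(8) pq by simp
        show "measure (\<nu> (?p + ?q)) F.E10s \<le> cn * (?p + ?q)" using a1ne nb by linarith
        show "measure (\<nu> (?p + ?q)) F.E01s \<le> cn * (?p + ?q)" using a2ne nb by linarith
        show "measure F.Sg F.E10s \<le> measure (\<nu> (?p + ?q)) F.E10s + \<bar>measure (\<nu> (?p + ?q)) F.E10s - measure F.Sg F.E10s\<bar>"
          by linarith
        show "measure F.Sg F.E01s \<le> measure (\<nu> (?p + ?q)) F.E01s + \<bar>measure (\<nu> (?p + ?q)) F.E01s - measure F.Sg F.E01s\<bar>"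
          by linarith
      qed (use c1 c2 cn in auto)
      show ?case unfolding ueq e4 using fin X0 by simp
    qed
  qed
qed

end
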